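(* Assume $\tau(p_j)>\min\{m',\tau(n_j)\}$ for all $j\in[k]$. Fix $\mathcal{A}$ and $b$. Then for a generic $C\in\mathbb{S}^{\mathbf n}\times\mathbb{R}^d$ (i.e. outside a Lebesgue measure zero set), problem (BM$_{\mathbf n}$) has no spurious 2-critical points.
   Context: Let $\mathbb{S}^{r}$ denote real symmetric $r\times r$ matrices, $\mathbb{S}^r_+$ the PSD cone, $A\bullet B=\operatorname{trace}(A^TB)$, $\tau(r)=\binom{r+1}{2}$. Let $\mathbf n=(n_1,\dots,n_\ell)$, $d\ge 0$, $1\le k\le \ell$, $\mathbb{S}^{\mathbf n}=\mathbb{S}^{n_1}\times\cdots\times\mathbb{S}^{n_\ell}$, $\mathbb{S}^{\mathbf n}_+=\mathbb{S}^{n_1}_+\times\cdots\times\mathbb{S}^{n_\ell}_+$, with the inner product $\langle\cdot,\cdot\rangle$ on $\mathbb{S}^{\mathbf n}\times\mathbb{R}^d$ being the sum of trace inner products and the dot product. Let $C\in\mathbb{S}^{\mathbf n}\times\mathbb{R}^d$, $b\in\mathbb{R}^m$, and $\mathcal{A}:\mathbb{S}^{\mathbf n}\times\mathbb{R}^d\to\mathbb{R}^m$ linear, written $\mathcal{A}(X_1,\dots,X_\ell,x)=\sum_j\mathcal{A}_j(X_j)+\mathcal{A}_0(x)$ with $\mathcal{A}_j(X_j)=(A_{i,j}\bullet X_j)_{i\in[m]}$, $A_{i,j}\in\mathbb{S}^{n_j}$ (this formula also defines $\mathcal{A}_j$ on nonsymmetric matrices); $\mathcal{A}^*$ is its adjoint.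 Let $\mathscr{X}=\{X=(X_1,\dots,X_\ell,x)\in\mathbb{S}^{\mathbf n}_+\times\mathbb{R}^d:\mathcal{A}(X)=b\}$, assumed nonempty, with $\min_{X\in\mathscr{X}}\langle C,X\rangle$ (SDP$_{\mathbf n}$) attained. For positive integers $p_1,\dots,p_k$, let $Y=(Y_1,\dots,Y_k)$, $Y_j\in\mathbb{R}^{n_j\times p_j}$, $q(Y)=(Y_1Y_1^T,\dots,Y_kY_k^T)$, $\overline X=(X_{k+1},\dots,X_\ell)$. Problem (BM$_{\mathbf n}$) is $\min_{Y,\overline X,x}\langle C,(q(Y),\overline X,x)\rangle$ subject to $(q(Y),\overline X,x)\in\mathscr{X}$. For $\lambda\in\mathbb{R}^m$ let $S(\lambda)=C-\mathcal{A}^*(\lambda)$ with components $S_j(\lambda)\in\mathbb{S}^{n_j}$ ($j\in[\ell]$) and $s(\lambda)\in\mathbb{R}^d$, and $\overline S(\lambda)=(S_{k+1}(\lambda),\dots,S_\ell(\lambda))$. A point $(Y,\overline X,x)$ is 1-critical if $(q(Y),\overline X,x)\in\mathscr{X}$ and there is $\lambda\in\mathbb{R}^m$ with $S_j(\lambda)\in\mathbb{S}^{n_j}_+$ for $j>k$, $\sum_{j>k}S_j(\lambda)\bullet X_j=0$, $s(\lambda)=0$, and $S_j(\lambda)Y_j=0$ for $j\in[k]$; it is 2-critical if moreover, for each $j\in[k]$, $S_j(\lambda)\bullet U_jU_j^T\ge0$ for all $U_j\in\mathbb{R}^{n_j\times p_j}$ with $\mathcal{A}_j(U_jY_j^T)=0$.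 A critical point is spurious if it is not a global minimizer of (BM$_{\mathbf n}$). A tuple $(r_{k+1},\dots,r_\ell)$ is a possible rank tuple if some $X\in\mathscr{X}$ has $\operatorname{rank}X_j=r_j$ for all $j>k$. Define $m'=\max\{m-d-\sum_{j>k}\tau(r_j)\}$ over possible rank tuples. *)

theory Defs
  imports "HOL-Probability.Probability" "Jordan_Normal_Form.DL_Rank"
begin

(* Conventions: block indices are 0-based, j \<in> {0..<l}; the first k blocks
   {0..<k} are factorized, blocks {k..<l} are kept as PSD matrices.  Data of the linear map \<A>:
     A i j  :: real mat   (the matrix A_{i,j}, symmetric, size n j \<times> n j)
     A0 i   :: real vec   (row i of \<A>_0 : R^d \<rightarrow> R^m, so \<A>_0(x)_i is the dot product of A0 i and x)
   A point of S^n \<times> R^d is a pair (Xs, x) with Xs :: nat \<Rightarrow> real mat. *)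

definition tau :: "nat \<Rightarrow> nat" where
  "tau r = (r + 1) choose 2"

definition mtrace :: "real mat \<Rightarrow> real" where
  "mtrace M = (\<Sum>i<dim_row M. M $$ (i, i))"

definition frob :: "real mat \<Rightarrow> real mat \<Rightarrow> real" where
  "frob P Q = mtrace (transpose_mat P * Q)"

definition psd :: "nat \<Rightarrow> real mat \<Rightarrow> bool" where
  "psd r X \<longleftrightarrow> X \<in> carrier_mat r r \<and> transpose_mat X = X \<and>
     (\<forall>v \<in> carrier_vec r. scalar_prod v (X *\<^sub>v v) \<ge> 0)"

definition symm :: "nat \<Rightarrow> real mat \<Rightarrow> bool" where
  "symm r X \<longleftrightarrow> X \<in> carrier_mat r r \<and> transpose_mat X = X"

text \<open>\<A>_j applied to an arbitrary (possibly nonsymmetric) n_j x n_j matrix.\<close>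
definition Aj :: "nat \<Rightarrow> (nat \<Rightarrow> nat \<Rightarrow> real mat) \<Rightarrow> nat \<Rightarrow> real mat \<Rightarrow> real vec" where
  "Aj m A j M = Matrix.vec m (\<lambda>i. frob (A i j) M)"

definition Aop :: "nat \<Rightarrow> nat \<Rightarrow> (nat \<Rightarrow> nat \<Rightarrow> real mat) \<Rightarrow> (nat \<Rightarrow> real vec)
    \<Rightarrow> (nat \<Rightarrow> real mat) \<Rightarrow> real vec \<Rightarrow> real vec" where
  "Aop l m A A0 Xs x = Matrix.vec m (\<lambda>i. (\<Sum>j<l. frob (A i j) (Xs j)) + scalar_prod (A0 i) x)"

definition feasible :: "nat \<Rightarrow> (nat \<Rightarrow> nat) \<Rightarrow> nat \<Rightarrow> nat \<Rightarrow> (nat \<Rightarrow> nat \<Rightarrow> real mat)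
    \<Rightarrow> (nat \<Rightarrow> real vec) \<Rightarrow> real vec \<Rightarrow> (nat \<Rightarrow> real mat) \<Rightarrow> real vec \<Rightarrow> bool" where
  "feasible l n d m A A0 b Xs x \<longleftrightarrow>
     (\<forall>j<l. psd (n j) (Xs j)) \<and> x \<in> carrier_vec d \<and> Aop l m A A0 Xs x = b"

definition obj :: "nat \<Rightarrow> (nat \<Rightarrow> real mat) \<Rightarrow> real vec \<Rightarrow> (nat \<Rightarrow> real mat) \<Rightarrow> real vec \<Rightarrow> real" where
  "obj l C c Xs x = (\<Sum>j<l. frob (C j) (Xs j)) + scalar_prod c x"

definition sdp_attained where
  "sdp_attained l n d m A A0 b C c \<longleftrightarrow>
     (\<exists>Xs x. feasible l n d m A A0 b Xs x \<and>
        (\<forall>Xs' x'. feasible l n d m A A0 b Xs' x' \<longrightarrow> obj l C c Xs x \<le> obj l C c Xs' x'))"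

definition qcomb :: "nat \<Rightarrow> (nat \<Rightarrow> real mat) \<Rightarrow> (nat \<Rightarrow> real mat) \<Rightarrow> nat \<Rightarrow> real mat" where
  "qcomb k Ys Xs = (\<lambda>j. if j < k then Ys j * transpose_mat (Ys j) else Xs j)"

definition bm_feasible where
  "bm_feasible l n d m A A0 b k p Ys Xs x \<longleftrightarrow>
     (\<forall>j<k. Ys j \<in> carrier_mat (n j) (p j)) \<and>
     feasible l n d m A A0 b (qcomb k Ys Xs) x"

definition bm_global_min where
  "bm_global_min l n d m A A0 b k p C c Ys Xs x \<longleftrightarrow>
     bm_feasible l n d m A A0 b k p Ys Xs x \<and>
     (\<forall>Ys' Xs' x'. bm_feasible l n d m A A0 b k p Ys' Xs' x' \<longrightarrow>
        obj l C c (qcomb k Ys Xs) x \<le> obj l C c (qcomb k Ys' Xs') x')"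

text \<open>S(\<lambda>) = C - \<A>^*(\<lambda>): matrix blocks and vector part.\<close>
definition Sblk :: "(nat \<Rightarrow> nat) \<Rightarrow> nat \<Rightarrow> (nat \<Rightarrow> nat \<Rightarrow> real mat) \<Rightarrow> (nat \<Rightarrow> real mat) \<Rightarrow> real vec \<Rightarrow> nat \<Rightarrow> real mat" where
  "Sblk n m A C lam j = Matrix.mat (n j) (n j)
     (\<lambda>(a, a'). C j $$ (a, a') - (\<Sum>i<m. vec_index lam i * A i j $$ (a, a')))"

definition Svec :: "nat \<Rightarrow> nat \<Rightarrow> (nat \<Rightarrow> real vec) \<Rightarrow> real vec \<Rightarrow> real vec \<Rightarrow> real vec" where
  "Svec d m A0 c lam = c - Matrix.vec d (\<lambda>t. \<Sum>i<m. vec_index lam i * vec_index (A0 i) t)"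

definition one_critical_mult where
  "one_critical_mult l n d m A A0 b k p C c Ys Xs x lam \<longleftrightarrow>
     bm_feasible l n d m A A0 b k p Ys Xs x \<and> lam \<in> carrier_vec m \<and>
     (\<forall>j\<in>{k..<l}. psd (n j) (Sblk n m A C lam j)) \<and>
     (\<Sum>j\<in>{k..<l}. frob (Sblk n m A C lam j) (Xs j)) = 0 \<and>
     Svec d m A0 c lam = 0\<^sub>v d \<and>
     (\<forall>j<k. Sblk n m A C lam j * Ys j = 0\<^sub>m (n j) (p j))"

definition one_critical where
  "one_critical l n d m A A0 b k p C c Ys Xs x \<longleftrightarrow>
     (\<exists>lam. one_critical_mult l n d m A A0 b k p C c Ys Xs x lam)"

definition two_critical where
  "two_critical l n d m A A0 b k p C c Ys Xs x \<longleftrightarrow>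
     (\<exists>lam. one_critical_mult l n d m A A0 b k p C c Ys Xs x lam \<and>
        (\<forall>j<k. \<forall>U \<in> carrier_mat (n j) (p j).
            Aj m A j (U * transpose_mat (Ys j)) = 0\<^sub>v m \<longrightarrow>
            frob (Sblk n m A C lam j) (U * transpose_mat U) \<ge> 0))"

definition spurious_two_critical where
  "spurious_two_critical l n d m A A0 b k p C c Ys Xs x \<longleftrightarrow>
     two_critical l n d m A A0 b k p C c Ys Xs x \<and>
     \<not> bm_global_min l n d m A A0 b k p C c Ys Xs x"

text \<open>Possible rank tuples (r_{k+1},...,r_l), as functions on {k..<l}.\<close>
definition possible_rank_tuple where
  "possible_rank_tuple l n d m A A0 b k r \<longleftrightarrow>
     (\<exists>Xs x. feasible l n d m A A0 b Xs x \<and>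
        (\<forall>j\<in>{k..<l}. vec_space.rank (n j) (Xs j) = r j))"

definition m_prime :: "nat \<Rightarrow> (nat \<Rightarrow> nat) \<Rightarrow> nat \<Rightarrow> nat \<Rightarrow> (nat \<Rightarrow> nat \<Rightarrow> real mat)
    \<Rightarrow> (nat \<Rightarrow> real vec) \<Rightarrow> real vec \<Rightarrow> nat \<Rightarrow> int" where
  "m_prime l n d m A A0 b k =
     Max {int m - int d - (\<Sum>j\<in>{k..<l}. int (tau (r j))) | r.
            possible_rank_tuple l n d m A A0 b k r}"

text \<open>Coordinates of the cost space S^n \<times> R^d: coordinate Inl (j,a,a') with
  j<l, a \<le> a' < n j is the (a,a') = (a',a) entry of C_j; coordinate Inr t with t<d is c_t.
  Lebesgue measure on S^n \<times> R^d is the product Lebesgue measure in these coordinates.\<close>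
definition cost_coords :: "nat \<Rightarrow> (nat \<Rightarrow> nat) \<Rightarrow> nat \<Rightarrow> ((nat \<times> nat \<times> nat) + nat) set" where
  "cost_coords l n d = Inl ` {(j, a, a'). j < l \<and> a \<le> a' \<and> a' < n j} \<union> Inr ` {..<d}"

definition cost_measure :: "nat \<Rightarrow> (nat \<Rightarrow> nat) \<Rightarrow> nat \<Rightarrow> (((nat \<times> nat \<times> nat) + nat) \<Rightarrow> real) measure" where
  "cost_measure l n d = PiM (cost_coords l n d) (\<lambda>_. lborel)"

definition Cmat_of :: "(nat \<Rightarrow> nat) \<Rightarrow> (((nat \<times> nat \<times> nat) + nat) \<Rightarrow> real) \<Rightarrow> nat \<Rightarrow> real mat" where
  "Cmat_of n v j = Matrix.mat (n j) (n j) (\<lambda>(a, a'). v (Inl (j, min a a', max a a')))"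

definition cvec_of :: "nat \<Rightarrow> (((nat \<times> nat \<times> nat) + nat) \<Rightarrow> real) \<Rightarrow> real vec" where
  "cvec_of d v = Matrix.vec d (\<lambda>t. v (Inr t))"

end

theory Submission
  imports Defs
begin
definition bil :: "nat \<Rightarrow> (nat \<Rightarrow> nat \<Rightarrow> real) \<Rightarrow> (nat \<Rightarrow> real) \<Rightarrow> (nat \<Rightarrow> real) \<Rightarrow> real" where
  "bil n M u w = (\<Sum>a<n. \<Sum>b<n. u a * M a b * w b)"

definition fsym :: "nat \<Rightarrow> (nat \<Rightarrow> nat \<Rightarrow> real) \<Rightarrow> bool" where
  "fsym n M \<longleftrightarrow> (\<forall>a<n. \<forall>b<n. M a b = M b a)"

definition fpsd :: "nat \<Rightarrow> (nat \<Rightarrow> nat \<Rightarrow> real) \<Rightarrow> bool" where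
  "fpsd n M \<longleftrightarrow> fsym n M \<and> (\<forall>u. 0 \<le> bil n M u u)"

lemma bil_sym: "fsym n M \<Longrightarrow> bil n M e u = bil n M u e"
  unfolding bil_def fsym_def
  apply (subst sum.swap)
  by (auto intro!: sum.cong simp: mult.commute mult.left_commute)

lemma bil_add_left: "bil n M (\<lambda>a. u a + v a) w = bil n M u w + bil n M v w"
  unfolding bil_def by (simp add: algebra_simps sum.distrib)
lemma bil_add_right: "bil n M w (\<lambda>a. u a + v a) = bil n M w u + bil n M w v"
  unfolding bil_def by (simp add: algebra_simps sum.distrib)
lemma bil_scale_left: "bil n M (\<lambda>a. t * u a) w = t * bil n M u w"
  unfolding bil_def by (simp add: algebra_simps sum_distrib_left)
lemma bil_scale_right: "bil n M w (\<lambda>a. t * u a) = t * bil n M w u"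
  unfolding bil_def by (simp add: algebra_simps sum_distrib_left)

lemma bil_quad:
  assumes "fsym n M"
  shows "bil n M (\<lambda>a. u a + t * e a) (\<lambda>a. u a + t * e a) =
     bil n M u u + 2 * t * bil n M u e + t^2 * bil n M e e"
  using bil_sym[OF assms, of e u]
  by (simp add: bil_add_left bil_add_right bil_scale_left bil_scale_right algebra_simps power2_eq_square)

lemma quad_nonneg_disc:
  fixes A B C :: real
  assumes "\<And>t. 0 \<le> A + 2 * t * B + t^2 * C"
  shows "B^2 \<le> A * C"
proof -
  have AC: "0 \<le> A + t^2 * C" for t
    using assms[of t] assms[of "-t"] by simp
  have C0: "0 \<le> C"
  proof (rule ccontr)
    assume "\<not> 0 \<le> C"
    hence C: "C < 0" by simp
    define t where "t = sqrt ((\<bar>A\<bar> + 1) / (- C))"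
    have "t^2 = (\<bar>A\<bar> + 1) / (- C)" unfolding t_def using C by (simp add: divide_nonneg_neg)
    hence "t^2 * C = - (\<bar>A\<bar> + 1)" using C by (simp add: field_simps)
    thus False using AC[of t] by simp
  qed
  show ?thesis
  proof (cases "C = 0")
    case True
    have "B = 0"
    proof (rule ccontr)
      assume "B \<noteq> 0"
      have "0 \<le> A + 2 * (-(\<bar>A\<bar> + 1) / (2*B)) * B" using assms[of "-(\<bar>A\<bar> + 1) / (2*B)"] True by simp
      also have "\<dots> = A - (\<bar>A\<bar> + 1)" using \<open>B \<noteq> 0\<close> by (simp add: field_simps)
      finally show False by simp
    qed
    thus ?thesis using True by simp
  next
    case False
    hence C: "C > 0" using C0 by simp
    have "0 \<le> A + 2 * (-B/C) * B + (-B/C)^2 * C" using assms .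
    also have "\<dots> = A - B^2 / C" using C by (simp add: field_simps power2_eq_square)
    finally have "B^2 / C \<le> A" by simp
    thus ?thesis using C by (simp add: field_simps mult.commute)
  qed
qed

lemma fpsd_cs:
  assumes "fpsd n M"
  shows "(bil n M u e)^2 \<le> bil n M u u * bil n M e e"
proof (rule quad_nonneg_disc)
  fix t
  show "0 \<le> bil n M u u + 2 * t * bil n M u e + t\<^sup>2 * bil n M e e"
    using assms bil_quad[of n M u t e] unfolding fpsd_def by metis
qed

lemma fpsd_zero_kernel:
  assumes "fpsd n M" "bil n M w w = 0" "a < n"
  shows "(\<Sum>b<n. M a b * w b) = 0"
proof -
  define e where "e = (\<lambda>c. if c = a then 1 else (0::real))"
  have "bil n M e w = (\<Sum>aa<n. e aa * (\<Sum>b<n. M aa b * w b))"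
    unfolding bil_def by (simp add: sum_distrib_left mult.assoc)
  also have "\<dots> = (\<Sum>b<n. M a b * w b)"
    unfolding e_def using assms(3) by (subst sum.remove[of _ a]) auto
  finally have "bil n M e w = (\<Sum>b<n. M a b * w b)" .
  moreover have "(bil n M e w)^2 \<le> 0" using fpsd_cs[OF assms(1), of e w] assms(2) by simp
  ultimately show ?thesis by simp
qed

lemma delta_sum_left: "a < (n::nat) \<Longrightarrow> (\<Sum>x<n. (if x = a then 1 else 0) * f x) = (f a :: real)"
  by (subst sum.cong[OF refl, of _ _ "\<lambda>x. if x = a then f x else 0"], simp, subst sum.delta, auto)
lemma delta_sum_right: "a < (n::nat) \<Longrightarrow> (\<Sum>x<n. f x * (if x = a then 1 else 0)) = (f a :: real)"
  by (subst sum.cong[OF refl, of _ _ "\<lambda>x. if x = a then f x else 0"], simp, subst sum.delta, auto)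

lemma bil_unit: "a < n \<Longrightarrow> b < n \<Longrightarrow>
  bil n M (\<lambda>c. if c = a then 1 else 0) (\<lambda>c. if c = b then 1 else 0) = M a b"
  unfolding bil_def by (simp add: mult.assoc sum_distrib_left[symmetric] delta_sum_right delta_sum_left)

lemma bil_Suc_zero: "u n = 0 \<Longrightarrow> w n = 0 \<Longrightarrow> bil (Suc n) M u w = bil n M u w"
  unfolding bil_def by simp

lemma fpsd_restrict:
  assumes "fpsd (Suc n) M" "M n n = 0"
  shows "\<forall>a<Suc n. M a n = 0" "fpsd n M"
proof -
  show "\<forall>a<Suc n. M a n = 0"
  proof (intro allI impI)
    fix a assume a: "a < Suc n"
    have "(bil (Suc n) M (\<lambda>c. if c = a then 1 else 0) (\<lambda>c. if c = n then 1 else 0))^2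
       \<le> bil (Suc n) M (\<lambda>c. if c = a then 1 else 0) (\<lambda>c. if c = a then 1 else 0) *
         bil (Suc n) M (\<lambda>c. if c = n then 1 else 0) (\<lambda>c. if c = n then 1 else 0)"
      by (rule fpsd_cs[OF assms(1)])
    hence "(M a n)^2 \<le> M a a * M n n" using a by (simp add: bil_unit)
    thus "M a n = 0" using assms(2) by simp
  qed
  show "fpsd n M"
    unfolding fpsd_def
  proof
    show "fsym n M" using assms(1) unfolding fpsd_def fsym_def by auto
    show "\<forall>u. 0 \<le> bil n M u u"
    proof
      fix u
      have "bil n M u u = bil (Suc n) M (u(n := 0)) (u(n := 0))"
        by (subst bil_Suc_zero) (auto simp: bil_def intro!: sum.cong)
      thus "0 \<le> bil n M u u" using assms(1) unfolding fpsd_def by simp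
    qed
  qed
qed

lemma fpsd_decomp:
  "fpsd n M \<Longrightarrow> \<exists>W. \<forall>a<n. \<forall>b<n. M a b = (\<Sum>i<n. W i a * W i b)"
proof (induction n arbitrary: M)
  case 0
  then show ?case by simp
next
  case (Suc n)
  have key: "\<exists>W. \<forall>a<Suc n. \<forall>b<Suc n. M' a b = (\<Sum>i<n. W i a * W i b)"
    if M': "fpsd (Suc n) M'" "M' n n = 0" for M'
  proof -
    have z: "\<forall>a<Suc n. M' a n = 0" and p: "fpsd n M'" using fpsd_restrict[OF M'] by auto
    have z2: "M' n a = 0" if "a < Suc n" for a
      using z that M'(1) unfolding fpsd_def fsym_def by auto
    obtain W where W: "\<forall>a<n. \<forall>b<n. M' a b = (\<Sum>i<n. W i a * W i b)" using Suc.IH[OF p] by blast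
    define W' where "W' i a = (if a < n then W i a else 0)" for i a
    show ?thesis
    proof (intro exI allI impI)
      fix a b assume ab: "a < Suc n" "b < Suc n"
      show "M' a b = (\<Sum>i<n. W' i a * W' i b)"
      proof (cases "a = n \<or> b = n")
        case True
        then show ?thesis using z ab z2 unfolding W'_def by auto
      next
        case False
        then show ?thesis using W ab unfolding W'_def by auto
      qed
    qed
  qed
  show ?case
  proof (cases "M n n = 0")
    case True
    then obtain W where W: "\<forall>a<Suc n. \<forall>b<Suc n. M a b = (\<Sum>i<n. W i a * W i b)"
      using key[OF Suc.prems] by blast
    define W' where "W' i a = (if i < n then W i a else 0)" for i a
    show ?thesis
      by (rule exI[of _ W']) (auto simp: W W'_def)
  next
    case False
    have "0 \<le> M n n"
      using Suc.prems unfolding fpsd_def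
      by (metis bil_unit lessI)
    hence pos: "M n n > 0" using False by simp
    define w where "w a = M a n / sqrt (M n n)" for a
    define M' where "M' a b = M a b - w a * w b" for a b
    have sym: "fsym (Suc n) M" using Suc.prems unfolding fpsd_def by auto
    have bilM': "bil (Suc n) M' u u = bil (Suc n) M u u - (bil (Suc n) M u (\<lambda>c. if c = n then 1 else 0))^2 / M n n" for u
    proof -
      have e: "bil (Suc n) M u (\<lambda>c. if c = n then 1 else 0) = (\<Sum>a<Suc n. u a * M a n)"
        unfolding bil_def by (simp only: mult.assoc sum_distrib_left[symmetric] delta_sum_right[OF lessI])
      have "bil (Suc n) M' u u = bil (Suc n) M u u - (\<Sum>a<Suc n. \<Sum>b<Suc n. u a * (w a * w b) * u b)"
        unfolding bil_def M'_def by (simp add: algebra_simps sum_subtractf)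
      also have "(\<Sum>a<Suc n. \<Sum>b<Suc n. u a * (w a * w b) * u b) = (\<Sum>a<Suc n. u a * w a) * (\<Sum>b<Suc n. u b * w b)"
        unfolding sum_product by (rule sum.cong, simp, rule sum.cong, simp_all add: mult_ac)
      also have "(\<Sum>a<Suc n. u a * w a) = (\<Sum>a<Suc n. u a * M a n) / sqrt (M n n)"
        unfolding w_def by (simp only: sum_divide_distrib times_divide_eq_right)
      finally show ?thesis using pos e by (simp add: power2_eq_square)
    qed
    have pM': "fpsd (Suc n) M'"
      unfolding fpsd_def
    proof
      show "fsym (Suc n) M'" using sym unfolding fsym_def M'_def by (auto simp: mult.commute)
      show "\<forall>u. 0 \<le> bil (Suc n) M' u u"
      proof
        fix u
        have "(bil (Suc n) M u (\<lambda>c. if c = n then 1 else 0))^2 \<le> bil (Suc n) M u u * M n n"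
          using fpsd_cs[OF Suc.prems, of u "\<lambda>c. if c = n then 1 else 0"] by (simp add: bil_unit)
        hence "(bil (Suc n) M u (\<lambda>c. if c = n then 1 else 0))^2 / M n n \<le> bil (Suc n) M u u"
          using pos by (simp add: divide_le_eq)
        thus "0 \<le> bil (Suc n) M' u u" using bilM' by simp
      qed
    qed
    have "M' n n = 0" unfolding M'_def w_def using pos by (simp add: power2_eq_square[symmetric] power_divide) (simp add: power2_eq_square)
    then obtain W where W: "\<forall>a<Suc n. \<forall>b<Suc n. M' a b = (\<Sum>i<n. W i a * W i b)"
      using key[OF pM'] by blast
    define W' where "W' i a = (if i < n then W i a else w a)" for i a
    show ?thesis
    proof (intro exI allI impI)
      fix a b assume ab: "a < Suc n" "b < Suc n"
      have "M a b = M' a b + w a * w b" unfolding M'_def by simp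
      also have "\<dots> = (\<Sum>i<Suc n. W' i a * W' i b)" using W ab unfolding W'_def by simp
      finally show "M a b = (\<Sum>i<Suc n. W' i a * W' i b)" .
    qed
  qed
qed

lemma fpsd_trace_decomp:
  assumes "\<forall>a<n. \<forall>b<n. X a b = (\<Sum>i<n. W i a * W i b)"
  shows "(\<Sum>a<n. \<Sum>b<n. S a b * X a b) = (\<Sum>i<n. bil n S (W i) (W i))"
proof -
  have "(\<Sum>a<n. \<Sum>b<n. S a b * X a b) = (\<Sum>a<n. \<Sum>b<n. \<Sum>i<n. W i a * S a b * W i b)"
    using assms by (auto intro!: sum.cong simp: sum_distrib_left algebra_simps)
  also have "\<dots> = (\<Sum>i<n. bil n S (W i) (W i))"
    unfolding bil_def
    by (subst sum.swap, rule sum.cong, simp, subst sum.swap, simp)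
  finally show ?thesis .
qed

lemma fpsd_trace_nonneg:
  assumes "fpsd n S" "fpsd n X"
  shows "0 \<le> (\<Sum>a<n. \<Sum>b<n. S a b * X a b)"
proof -
  obtain W where W: "\<forall>a<n. \<forall>b<n. X a b = (\<Sum>i<n. W i a * W i b)" using fpsd_decomp[OF assms(2)] by blast
  show ?thesis unfolding fpsd_trace_decomp[OF W]
    using assms(1) unfolding fpsd_def by (simp add: sum_nonneg)
qed

lemma fpsd_trace_zero:
  assumes "fpsd n S" "fpsd n X" "(\<Sum>a<n. \<Sum>b<n. S a b * X a b) = 0"
  shows "\<forall>a<n. \<forall>b<n. (\<Sum>c<n. S a c * X c b) = 0"
proof (intro allI impI)
  fix a b assume ab: "a < n" "b < n"
  obtain W where W: "\<forall>a<n. \<forall>b<n. X a b = (\<Sum>i<n. W i a * W i b)" using fpsd_decomp[OF assms(2)] by blast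
  have nn: "\<forall>i\<in>{..<n}. 0 \<le> bil n S (W i) (W i)" using assms(1) unfolding fpsd_def by simp
  have "(\<Sum>i<n. bil n S (W i) (W i)) = 0" using assms(3) unfolding fpsd_trace_decomp[OF W] .
  hence z: "\<forall>i\<in>{..<n}. bil n S (W i) (W i) = 0" using sum_nonneg_eq_0_iff[of "{..<n}" "\<lambda>i. bil n S (W i) (W i)"] nn by simp
  have "(\<Sum>c<n. S a c * X c b) = (\<Sum>c<n. \<Sum>i<n. S a c * W i c * W i b)"
    using W ab by (auto intro!: sum.cong simp: sum_distrib_left algebra_simps)
  also have "\<dots> = (\<Sum>i<n. (\<Sum>c<n. S a c * W i c) * W i b)"
    by (subst sum.swap) (simp add: sum_distrib_right)
  also have "\<dots> = 0"
    using fpsd_zero_kernel[OF assms(1) _ ab(1)] z by simp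
  finally show "(\<Sum>c<n. S a c * X c b) = 0" .
qed

definition ent :: "real mat \<Rightarrow> nat \<Rightarrow> nat \<Rightarrow> real" where
  "ent X a b = X $$ (a, b)"

lemma scalar_prod_quad:
  assumes "X \<in> carrier_mat r r" "v \<in> carrier_vec r"
  shows "scalar_prod v (X *\<^sub>v v) = bil r (ent X) (\<lambda>i. v $ i) (\<lambda>i. v $ i)"
  using assms unfolding bil_def ent_def scalar_prod_def
  by (auto simp: sum_distrib_left mult.assoc scalar_prod_def intro!: sum.cong)

lemma psd_fpsd:
  assumes "psd r X" shows "fpsd r (ent X)"
proof -
  have X: "X \<in> carrier_mat r r" "transpose_mat X = X" using assms unfolding psd_def by auto
  have "fsym r (ent X)" unfolding fsym_def ent_def
  proof (intro allI impI)
    fix a b assume "a < r" "b < r"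
    thus "X $$ (a, b) = X $$ (b, a)" using X by (metis carrier_matD index_transpose_mat(1))
  qed
  moreover have "0 \<le> bil r (ent X) u u" for u
  proof -
    have "0 \<le> scalar_prod (vec r u) (X *\<^sub>v vec r u)" using assms unfolding psd_def by auto
    also have "\<dots> = bil r (ent X) (\<lambda>i. vec r u $ i) (\<lambda>i. vec r u $ i)" using scalar_prod_quad X by auto
    also have "\<dots> = bil r (ent X) u u" unfolding bil_def by simp
    finally show ?thesis .
  qed
  ultimately show ?thesis unfolding fpsd_def by auto
qed

lemma fpsd_psd:
  assumes X: "X \<in> carrier_mat r r" and f: "fpsd r (ent X)"
  shows "psd r X"
  unfolding psd_def
proof (intro conjI ballI)
  show "X \<in> carrier_mat r r" by fact
  show "transpose_mat X = X"
    using X f unfolding fpsd_def fsym_def ent_def by (intro eq_matI) auto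
  fix v :: "real vec" assume "v \<in> carrier_vec r"
  thus "0 \<le> scalar_prod v (X *\<^sub>v v)" using scalar_prod_quad[OF X] f unfolding fpsd_def by auto
qed

lemma frob_sum:
  assumes "P \<in> carrier_mat r r" "Q \<in> carrier_mat r r"
  shows "frob P Q = (\<Sum>a<r. \<Sum>b<r. P $$ (a, b) * Q $$ (a, b))"
proof -
  have "frob P Q = (\<Sum>i<r. \<Sum>a<r. P $$ (a, i) * Q $$ (a, i))"
    using assms unfolding frob_def mtrace_def
    by (auto simp: scalar_prod_def intro!: sum.cong)
  also have "\<dots> = (\<Sum>a<r. \<Sum>b<r. P $$ (a, b) * Q $$ (a, b))" by (rule sum.swap)
  finally show ?thesis .
qed

lemma frob_sum_gen:
  assumes "P \<in> carrier_mat r c" "Q \<in> carrier_mat r c"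
  shows "frob P Q = (\<Sum>a<r. \<Sum>b<c. P $$ (a, b) * Q $$ (a, b))"
proof -
  have "frob P Q = (\<Sum>i<c. \<Sum>a<r. P $$ (a, i) * Q $$ (a, i))"
    using assms unfolding frob_def mtrace_def
    by (auto simp: scalar_prod_def intro!: sum.cong)
  also have "\<dots> = (\<Sum>a<r. \<Sum>b<c. P $$ (a, b) * Q $$ (a, b))" by (rule sum.swap)
  finally show ?thesis .
qed

lemma frob_psd_nonneg:
  assumes "psd r S" "psd r X" shows "0 \<le> frob S X"
proof -
  have c: "S \<in> carrier_mat r r" "X \<in> carrier_mat r r" using assms unfolding psd_def by auto
  show ?thesis unfolding frob_sum[OF c]
    using fpsd_trace_nonneg[OF psd_fpsd[OF assms(1)] psd_fpsd[OF assms(2)]] unfolding ent_def .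
qed

lemma frob_psd_zero:
  assumes "psd r S" "psd r X" "frob S X = 0"
  shows "\<forall>a<r. \<forall>b<r. (\<Sum>c<r. S $$ (a, c) * X $$ (c, b)) = 0"
proof -
  have c: "S \<in> carrier_mat r r" "X \<in> carrier_mat r r" using assms unfolding psd_def by auto
  show ?thesis
    using fpsd_trace_zero[OF psd_fpsd[OF assms(1)] psd_fpsd[OF assms(2)]] assms(3)
    unfolding frob_sum[OF c] ent_def by blast
qed

lemma Sblk_carrier: "Sblk n m A C lam j \<in> carrier_mat (n j) (n j)"
  unfolding Sblk_def by simp

lemma Sblk_index: "a < n j \<Longrightarrow> b < n j \<Longrightarrow>
  Sblk n m A C lam j $$ (a, b) = C j $$ (a, b) - (\<Sum>i<m. lam $ i * A i j $$ (a, b))"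
  unfolding Sblk_def by simp

lemma Cmat_index: "a < n j \<Longrightarrow> b < n j \<Longrightarrow> Cmat_of n v j $$ (a, b) = v (Inl (j, min a b, max a b))"
  unfolding Cmat_of_def by simp

lemma Cmat_carrier: "Cmat_of n v j \<in> carrier_mat (n j) (n j)"
  unfolding Cmat_of_def by simp

lemma split_lessThan_sum:
  assumes "k \<le> (l::nat)"
  shows "(\<Sum>j<l. f j) = (\<Sum>j<k. f j) + (\<Sum>j\<in>{k..<l}. f j)"
  using sum.atLeastLessThan_concat[of 0 k l f] assms by (simp add: atLeast0LessThan)

lemma symm_carrier: "symm r X \<Longrightarrow> X \<in> carrier_mat r r"
  unfolding symm_def by auto

lemma symm_entry: "symm r X \<Longrightarrow> a < r \<Longrightarrow> b < r \<Longrightarrow> X $$ (a, b) = X $$ (b, a)"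
  unfolding symm_def by (metis carrier_matD index_transpose_mat(1))

lemma sum_swap3: "(\<Sum>a\<in>A. \<Sum>b\<in>B. \<Sum>i\<in>I. f a b i) = (\<Sum>i\<in>I. \<Sum>a\<in>A. \<Sum>b\<in>B. f a b i)"
proof -
  have "(\<Sum>a\<in>A. \<Sum>b\<in>B. \<Sum>i\<in>I. f a b i) = (\<Sum>a\<in>A. \<Sum>i\<in>I. \<Sum>b\<in>B. f a b i)"
    by (rule sum.cong[OF refl], rule sum.swap)
  also have "\<dots> = (\<Sum>i\<in>I. \<Sum>a\<in>A. \<Sum>b\<in>B. f a b i)" by (rule sum.swap)
  finally show ?thesis .
qed

lemma obj_dual:
  assumes A_sym: "\<And>i j. i < m \<Longrightarrow> j < l \<Longrightarrow> symm (n j) (A i j)"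
    and A0_dim: "\<And>i. i < m \<Longrightarrow> A0 i \<in> carrier_vec d"
    and feas: "feasible l n d m A A0 b Xs x"
    and C: "\<And>j. j < l \<Longrightarrow> C j \<in> carrier_mat (n j) (n j)"
    and c: "c \<in> carrier_vec d"
    and sv: "Svec d m A0 c lam = 0\<^sub>v d"
  shows "obj l C c Xs x = (\<Sum>j<l. frob (Sblk n m A C lam j) (Xs j)) + (\<Sum>i<m. lam $ i * b $ i)"
proof -
  have X: "Xs j \<in> carrier_mat (n j) (n j)" if "j < l" for j
    using feas that unfolding feasible_def psd_def by auto
  have x: "x \<in> carrier_vec d" using feas unfolding feasible_def by auto
  have bi: "b $ i = (\<Sum>j<l. frob (A i j) (Xs j)) + scalar_prod (A0 i) x" if "i < m" for i
    using feas that unfolding feasible_def Aop_def by auto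
  have cj: "frob (C j) (Xs j) = frob (Sblk n m A C lam j) (Xs j) + (\<Sum>i<m. lam $ i * frob (A i j) (Xs j))"
    if j: "j < l" for j
  proof -
    have "frob (C j) (Xs j) = (\<Sum>a<n j. \<Sum>b<n j. C j $$ (a, b) * Xs j $$ (a, b))"
      using frob_sum[OF C[OF j] X[OF j]] .
    also have "\<dots> = (\<Sum>a<n j. \<Sum>b<n j. Sblk n m A C lam j $$ (a, b) * Xs j $$ (a, b)
                + (\<Sum>i<m. lam $ i * (A i j $$ (a, b) * Xs j $$ (a, b))))"
      by (auto simp: Sblk_index algebra_simps sum_distrib_right sum_distrib_left intro!: sum.cong)
    also have "\<dots> = frob (Sblk n m A C lam j) (Xs j) + (\<Sum>i<m. lam $ i * frob (A i j) (Xs j))"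
    proof -
      have e1: "frob (Sblk n m A C lam j) (Xs j) = (\<Sum>a<n j. \<Sum>b<n j. Sblk n m A C lam j $$ (a, b) * Xs j $$ (a, b))"
        by (rule frob_sum[OF Sblk_carrier[of n m A C lam j] X[OF j]])
      have e2: "frob (A i j) (Xs j) = (\<Sum>a<n j. \<Sum>b<n j. A i j $$ (a, b) * Xs j $$ (a, b))" if "i < m" for i
        by (rule frob_sum[OF symm_carrier[OF A_sym[OF that j]] X[OF j]])
      have e3: "(\<Sum>i<m. lam $ i * frob (A i j) (Xs j)) = (\<Sum>i<m. \<Sum>a<n j. \<Sum>b<n j. lam $ i * (A i j $$ (a, b) * Xs j $$ (a, b)))"
        by (simp add: e2 sum_distrib_left)
      show ?thesis unfolding e1 e3 sum.distrib by (subst sum_swap3) (rule refl)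
    qed
    finally show ?thesis .
  qed
  have ct: "c $ t = (\<Sum>i<m. lam $ i * A0 i $ t)" if "t < d" for t
  proof -
    have "(Svec d m A0 c lam) $ t = 0" using sv that by simp
    thus ?thesis using that c unfolding Svec_def by simp
  qed
  have cx: "scalar_prod c x = (\<Sum>i<m. lam $ i * scalar_prod (A0 i) x)"
    using x by (simp add: scalar_prod_def ct sum_distrib_left sum_distrib_right mult.assoc)
      (rule sum.swap)
  have "obj l C c Xs x = (\<Sum>j<l. frob (Sblk n m A C lam j) (Xs j)) +
      (\<Sum>j<l. \<Sum>i<m. lam $ i * frob (A i j) (Xs j)) + (\<Sum>i<m. lam $ i * scalar_prod (A0 i) x)"
    unfolding obj_def using cj cx by (simp add: sum.distrib)
  also have "\<dots> = (\<Sum>j<l. frob (Sblk n m A C lam j) (Xs j)) + (\<Sum>i<m. lam $ i * b $ i)"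
    by (subst sum.swap) (simp add: bi sum_distrib_left sum.distrib distrib_left)
  finally show ?thesis .
qed

lemma frob_YYt_zero:
  assumes S: "S \<in> carrier_mat r r" and Y: "Y \<in> carrier_mat r q"
    and SY: "S * Y = 0\<^sub>m r q"
  shows "frob S (Y * transpose_mat Y) = 0"
proof -
  have SYi: "(\<Sum>b<r. S $$ (a, b) * Y $$ (b, c)) = 0" if "a < r" "c < q" for a c
  proof -
    have "(S * Y) $$ (a, c) = 0" using SY that by simp
    thus ?thesis using S Y that by (simp add: scalar_prod_def atLeast0LessThan)
  qed
  have "frob S (Y * transpose_mat Y) = (\<Sum>a<r. \<Sum>b<r. S $$ (a, b) * (\<Sum>c<q. Y $$ (a, c) * Y $$ (b, c)))"
    using S Y by (subst frob_sum[where r = r]) (auto simp: scalar_prod_def atLeast0LessThan intro!: sum.cong)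
  also have "\<dots> = (\<Sum>c<q. \<Sum>a<r. Y $$ (a, c) * (\<Sum>b<r. S $$ (a, b) * Y $$ (b, c)))"
    by (simp add: sum_distrib_left sum_distrib_right algebra_simps)
      (subst sum.swap, rule sum.cong, simp, subst sum.swap, rule sum.cong, simp, rule sum.cong, auto)
  also have "\<dots> = 0" using SYi by simp
  finally show ?thesis .
qed

lemma global_min_from_psd:
  assumes A_sym: "\<And>i j. i < m \<Longrightarrow> j < l \<Longrightarrow> symm (n j) (A i j)"
    and A0_dim: "\<And>i. i < m \<Longrightarrow> A0 i \<in> carrier_vec d"
    and kl: "k \<le> l"
    and C: "\<And>j. j < l \<Longrightarrow> C j \<in> carrier_mat (n j) (n j)"
    and c: "c \<in> carrier_vec d"
    and oc: "one_critical_mult l n d m A A0 b k p C c Ys Xs x lam"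
    and psdS: "\<And>j. j < l \<Longrightarrow> psd (n j) (Sblk n m A C lam j)"
  shows "bm_global_min l n d m A A0 b k p C c Ys Xs x"
proof -
  have bf: "bm_feasible l n d m A A0 b k p Ys Xs x" and sv: "Svec d m A0 c lam = 0\<^sub>v d"
    and SY: "\<And>j. j < k \<Longrightarrow> Sblk n m A C lam j * Ys j = 0\<^sub>m (n j) (p j)"
    and cs: "(\<Sum>j\<in>{k..<l}. frob (Sblk n m A C lam j) (Xs j)) = 0"
    using oc unfolding one_critical_mult_def by auto
  have feas: "feasible l n d m A A0 b (qcomb k Ys Xs) x" using bf unfolding bm_feasible_def by auto
  have Yc: "\<And>j. j < k \<Longrightarrow> Ys j \<in> carrier_mat (n j) (p j)" using bf unfolding bm_feasible_def by auto
  have z: "(\<Sum>j<l. frob (Sblk n m A C lam j) (qcomb k Ys Xs j)) = 0"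
  proof -
    have "(\<Sum>j<l. frob (Sblk n m A C lam j) (qcomb k Ys Xs j)) =
      (\<Sum>j<k. frob (Sblk n m A C lam j) (qcomb k Ys Xs j)) + (\<Sum>j\<in>{k..<l}. frob (Sblk n m A C lam j) (qcomb k Ys Xs j))"
      by (rule split_lessThan_sum[OF kl])
    also have "(\<Sum>j<k. frob (Sblk n m A C lam j) (qcomb k Ys Xs j)) = 0"
      by (rule sum.neutral) (auto simp: qcomb_def intro!: frob_YYt_zero[OF Sblk_carrier Yc SY])
    also have "(\<Sum>j\<in>{k..<l}. frob (Sblk n m A C lam j) (qcomb k Ys Xs j)) = 0"
      using cs by (simp add: qcomb_def)
    finally show ?thesis by simp
  qed
  show ?thesis
    unfolding bm_global_min_def
  proof (intro conjI allI impI bf)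
    fix Ys' Xs' x' assume bf': "bm_feasible l n d m A A0 b k p Ys' Xs' x'"
    have feas': "feasible l n d m A A0 b (qcomb k Ys' Xs') x'" using bf' unfolding bm_feasible_def by auto
    have nn: "0 \<le> (\<Sum>j<l. frob (Sblk n m A C lam j) (qcomb k Ys' Xs' j))"
      using feas' psdS by (intro sum_nonneg frob_psd_nonneg) (auto simp: feasible_def)
    have e1: "obj l C c (qcomb k Ys Xs) x = (\<Sum>j<l. frob (Sblk n m A C lam j) (qcomb k Ys Xs j)) + (\<Sum>i<m. lam $ i * b $ i)"
      by (rule obj_dual[OF A_sym A0_dim feas C c sv])
    have e2: "obj l C c (qcomb k Ys' Xs') x' = (\<Sum>j<l. frob (Sblk n m A C lam j) (qcomb k Ys' Xs' j)) + (\<Sum>i<m. lam $ i * b $ i)"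
      by (rule obj_dual[OF A_sym A0_dim feas' C c sv])
    show "obj l C c (qcomb k Ys Xs) x \<le> obj l C c (qcomb k Ys' Xs') x'"
      unfolding e1 e2 using z nn by simp
  qed
qed

lemma Sblk_fsym:
  assumes A_sym: "\<And>i. i < m \<Longrightarrow> symm (n j) (A i j)"
  shows "fsym (n j) (ent (Sblk n m A (Cmat_of n v) lam j))"
  unfolding fsym_def ent_def
proof (intro allI impI)
  fix a b assume ab: "a < n j" "b < n j"
  have "A i j $$ (a, b) = A i j $$ (b, a)" if "i < m" for i using symm_entry[OF A_sym[OF that] ab] .
  thus "Sblk n m A (Cmat_of n v) lam j $$ (a, b) = Sblk n m A (Cmat_of n v) lam j $$ (b, a)"
    using ab by (simp add: Sblk_index Cmat_index min.commute max.commute)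
qed

lemma psd_from_second_order:
  assumes A_sym: "\<And>i. i < m \<Longrightarrow> symm (n j) (A i j)"
    and Y: "Y \<in> carrier_mat (n j) q" and w: "w \<in> carrier_vec q" "w \<noteq> 0\<^sub>v q" "Y *\<^sub>v w = 0\<^sub>v (n j)"
    and so: "\<forall>U \<in> carrier_mat (n j) q. Aj m A j (U * transpose_mat Y) = 0\<^sub>v m \<longrightarrow>
              frob (Sblk n m A (Cmat_of n v) lam j) (U * transpose_mat U) \<ge> 0"
  shows "psd (n j) (Sblk n m A (Cmat_of n v) lam j)"
proof (rule fpsd_psd[OF Sblk_carrier])
  let ?S = "Sblk n m A (Cmat_of n v) lam j"
  have Yw: "(\<Sum>c<q. Y $$ (b, c) * w $ c) = 0" if "b < n j" for b
  proof -
    have "(Y *\<^sub>v w) $ b = 0" using w that by simp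
    moreover have "(Y *\<^sub>v w) $ b = (\<Sum>c<q. Y $$ (b, c) * w $ c)"
      using Y w(1) that by (simp add: scalar_prod_def atLeast0LessThan)
    ultimately show ?thesis by simp
  qed
  have ww: "(\<Sum>c<q. w $ c * w $ c) > 0"
  proof -
    obtain c where c: "c < q" "w $ c \<noteq> 0" using w by (metis carrier_vecD eq_vecI index_zero_vec)
    have "0 < w $ c * w $ c" by (metis c(2) not_real_square_gt_zero)
    also have "\<dots> \<le> (\<Sum>c<q. w $ c * w $ c)" using c by (intro member_le_sum) auto
    finally show ?thesis .
  qed
  show "fpsd (n j) (ent ?S)"
    unfolding fpsd_def
  proof (intro conjI allI)
    show "fsym (n j) (ent ?S)" by (rule Sblk_fsym) (rule A_sym)
    fix u
    define U where "U = Matrix.mat (n j) q (\<lambda>(a, c). u a * w $ c)"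
    have U: "U \<in> carrier_mat (n j) q" unfolding U_def by simp
    have UY: "U * transpose_mat Y = 0\<^sub>m (n j) (n j)"
    proof (rule eq_matI)
      fix a b assume ab: "a < dim_row (0\<^sub>m (n j) (n j))" "b < dim_col (0\<^sub>m (n j) (n j))"
      have "(U * transpose_mat Y) $$ (a, b) = (\<Sum>c<q. u a * w $ c * Y $$ (b, c))"
        using ab Y unfolding U_def by (simp add: scalar_prod_def atLeast0LessThan)
      also have "\<dots> = u a * (\<Sum>c<q. Y $$ (b, c) * w $ c)" by (simp add: sum_distrib_left mult_ac)
      also have "\<dots> = 0" using Yw ab by simp
      finally show "(U * transpose_mat Y) $$ (a, b) = 0\<^sub>m (n j) (n j) $$ (a, b)" using ab by simp
    qed (use Y U in auto)
    have f0: "frob (A i j) (0\<^sub>m (n j) (n j)) = 0" if "i < m" for i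
      by (subst frob_sum[OF symm_carrier[OF A_sym[OF that]]]) auto
    have "Aj m A j (U * transpose_mat Y) = 0\<^sub>v m"
      unfolding UY Aj_def by (intro eq_vecI) (auto simp: f0)
    hence nn: "0 \<le> frob ?S (U * transpose_mat U)" using so U by auto
    define W where "W = (\<Sum>c<q. w $ c * w $ c)"
    have UU: "(U * transpose_mat U) $$ (a, b) = u a * u b * W" if "a < n j" "b < n j" for a b
      using that unfolding U_def W_def by (simp add: scalar_prod_def atLeast0LessThan sum_distrib_left mult_ac)
    have "frob ?S (U * transpose_mat U) = (\<Sum>a<n j. \<Sum>b<n j. ?S $$ (a, b) * (U * transpose_mat U) $$ (a, b))"
      using U by (subst frob_sum[where r = "n j"]) (auto simp: Sblk_carrier)
    also have "\<dots> = (\<Sum>a<n j. \<Sum>b<n j. ?S $$ (a, b) * (u a * u b * W))"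
      using UU by (auto intro!: sum.cong)
    also have "\<dots> = W * bil (n j) (ent ?S) u u"
      unfolding bil_def ent_def sum_distrib_left by (rule sum.cong, simp, rule sum.cong, simp, simp add: mult_ac)
    finally have "0 \<le> W * bil (n j) (ent ?S) u u" using nn by simp
    thus "0 \<le> bil (n j) (ent ?S) u u" using ww unfolding W_def[symmetric] by (simp add: zero_le_mult_iff)
  qed
qed

definition indep_fam :: "nat \<Rightarrow> 'i set \<Rightarrow> ('i \<Rightarrow> real vec) \<Rightarrow> bool" where
  "indep_fam n I vf \<longleftrightarrow> (\<forall>c. (\<forall>i<n. (\<Sum>t\<in>I. c t * vf t $ i) = 0) \<longrightarrow> (\<forall>t\<in>I. c t = 0))"

lemma indep_set_card_le:
  fixes Z :: "real vec set"
  assumes fin: "finite Z" and Zc: "Z \<subseteq> carrier_vec n" and ind: "indep_fam n Z id"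
  shows "card Z \<le> n"
proof -
  interpret V: vec_space "TYPE(real)" n .
  have li: "V.lin_indpt Z"
  proof
    assume "V.lin_dep Z"
    from V.finite_lin_dep[OF fin this] Zc obtain a v where
      a: "V.lincomb a Z = 0\<^sub>v n" "v \<in> Z" "a v \<noteq> 0" by auto
    have "\<forall>i<n. (\<Sum>t\<in>Z. a t * id t $ i) = 0"
    proof (intro allI impI)
      fix i assume i: "i < n"
      have "V.lincomb a Z $ i = (\<Sum>t\<in>Z. a t * t $ i)" by (rule V.lincomb_index[OF i Zc])
      thus "(\<Sum>t\<in>Z. a t * id t $ i) = 0" using a(1) i by simp
    qed
    hence "a v = 0" using ind a(2) unfolding indep_fam_def by blast
    thus False using a(3) by simp
  qed
  have "card Z \<le> V.dim" by (rule V.li_le_dim(2)[OF V.fin_dim _ li]) (use Zc in simp)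
  thus ?thesis using V.dim_is_n by simp
qed

lemma indep_fam_inj:
  assumes fin: "finite I" and ind: "indep_fam n I vf" and "\<forall>t\<in>I. vf t \<in> carrier_vec n"
  shows "inj_on vf I"
proof (rule inj_onI, rule ccontr)
  fix s t assume st: "s \<in> I" "t \<in> I" "vf s = vf t" "s \<noteq> t"
  define c where "c x = (if x = s then 1 else if x = t then -1 else (0::real))" for x
  have "\<forall>i<n. (\<Sum>x\<in>I. c x * vf x $ i) = 0"
  proof (intro allI impI)
    fix i assume "i < n"
    have "(\<Sum>x\<in>I. c x * vf x $ i) = (\<Sum>x\<in>I. (if x = s then vf s $ i else 0) + (if x = t then - vf t $ i else 0))"
      unfolding c_def using st by (intro sum.cong) auto
    also have "\<dots> = vf s $ i - vf t $ i" using fin st by (simp add: sum.distrib)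
    finally show "(\<Sum>x\<in>I. c x * vf x $ i) = 0" using st by simp
  qed
  hence "c s = 0" using ind st unfolding indep_fam_def by blast
  thus False unfolding c_def by simp
qed

lemma indep_fam_card_le:
  assumes fin: "finite I" and vc: "\<forall>t\<in>I. vf t \<in> carrier_vec n" and ind: "indep_fam n I vf"
  shows "card I \<le> n"
proof -
  have inj: "inj_on vf I" by (rule indep_fam_inj[OF fin ind vc])
  have "indep_fam n (vf ` I) id"
    unfolding indep_fam_def
  proof (intro allI impI ballI)
    fix a u assume h: "\<forall>i<n. (\<Sum>t\<in>vf ` I. a t * id t $ i) = 0" and u: "u \<in> vf ` I"
    have "\<forall>i<n. (\<Sum>t\<in>I. (a \<circ> vf) t * vf t $ i) = 0"
      using h by (simp add: sum.reindex[OF inj])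
    hence "\<forall>t\<in>I. (a \<circ> vf) t = 0" using ind unfolding indep_fam_def by blast
    thus "a u = 0" using u by auto
  qed
  hence "card (vf ` I) \<le> n" using indep_set_card_le[of "vf ` I" n] fin vc by auto
  thus ?thesis using card_image[OF inj] by simp
qed

lemma rank_indep:
  assumes X: "X \<in> carrier_mat r c"
  shows "\<exists>Z. finite Z \<and> Z \<subseteq> set (cols X) \<and> card Z = vec_space.rank r X \<and> indep_fam r Z id"
proof -
  interpret V: vec_space "TYPE(real)" r .
  obtain S where S: "maximal S (\<lambda>T. T \<subseteq> set (cols X) \<and> V.lin_indpt T)"
    using maximal_exists[of "(\<lambda>T. T \<subseteq> set (cols X) \<and> V.lin_indpt T)" "card (set (cols X))" "{}"]
    by (meson List.finite_set card_mono empty_iff empty_subsetI V.finite_lin_indpt2 rev_finite_subset)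
  have rk: "V.rank X = card S" by (rule V.rank_card_indpt[OF X S])
  have Ssub: "S \<subseteq> set (cols X)" and li: "V.lin_indpt S" using S unfolding maximal_def by auto
  have fin: "finite S" using Ssub finite_subset by blast
  have Sc: "S \<subseteq> carrier_vec r" using Ssub X cols_dim by blast
  have "indep_fam r S id"
    unfolding indep_fam_def
  proof (intro allI impI ballI)
    fix a u assume h: "\<forall>i<r. (\<Sum>t\<in>S. a t * id t $ i) = 0" and u: "u \<in> S"
    have "V.lincomb a S = 0\<^sub>v r"
    proof (rule eq_vecI)
      show "dim_vec (V.lincomb a S) = dim_vec (0\<^sub>v r)" using V.lincomb_dim[OF fin Sc] by simp
      fix i assume "i < dim_vec (0\<^sub>v r)"
      hence i: "i < r" by simp
      show "V.lincomb a S $ i = 0\<^sub>v r $ i" using V.lincomb_index[OF i Sc] h i by simp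
    qed
    hence "a \<in> S \<rightarrow> {0}" using V.not_lindepD[OF li fin subset_refl, of a] by simp
    thus "a u = 0" using u by auto
  qed
  thus ?thesis using fin Ssub rk by auto
qed

lemma cols_indep_inj:
  assumes Y: "Y \<in> carrier_mat r q"
    and inj: "\<forall>w\<in>carrier_vec q. Y *\<^sub>v w = 0\<^sub>v r \<longrightarrow> w = 0\<^sub>v q"
  shows "indep_fam r {..<q} (\<lambda>c. col Y c)"
  unfolding indep_fam_def
proof (intro allI impI ballI)
  fix a t assume h: "\<forall>i<r. (\<Sum>c\<in>{..<q}. a c * col Y c $ i) = 0" and t: "t \<in> {..<q}"
  have "Y *\<^sub>v vec q a = 0\<^sub>v r"
  proof (rule eq_vecI)
    fix i assume "i < dim_vec (0\<^sub>v r)"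
    hence i: "i < r" by simp
    have "(Y *\<^sub>v vec q a) $ i = (\<Sum>c<q. a c * col Y c $ i)"
      using Y i by (auto simp: scalar_prod_def atLeast0LessThan mult.commute intro!: sum.cong)
    thus "(Y *\<^sub>v vec q a) $ i = 0\<^sub>v r $ i" using h i by simp
  qed (use Y in simp)
  hence "vec q a = 0\<^sub>v q" using inj by simp
  hence "vec q a $ t = 0" using t by simp
  thus "a t = 0" using t by simp
qed

definition idx_indep :: "nat \<Rightarrow> (nat \<Rightarrow> nat \<Rightarrow> real) \<Rightarrow> nat set \<Rightarrow> bool" where
  "idx_indep n S R \<longleftrightarrow> (\<forall>c. (\<forall>i<n. (\<Sum>s\<in>R. c s * S i s) = 0) \<longrightarrow> (\<forall>s\<in>R. c s = 0))"

lemma span_from_kernel: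
  fixes S :: "nat \<Rightarrow> nat \<Rightarrow> real" and zf :: "'j \<Rightarrow> real vec"
  assumes sym: "fsym n S" and finJ: "finite J" and zc: "\<forall>t\<in>J. zf t \<in> carrier_vec n"
    and ind: "indep_fam n J zf"
    and ker: "\<forall>t\<in>J. \<forall>a<n. (\<Sum>b<n. S a b * zf t $ b) = 0"
  shows "\<exists>R \<subseteq> {..<n}. card R + card J \<le> n \<and>
           (\<forall>a<n. \<exists>co. \<forall>b<n. S b a = (\<Sum>s\<in>R. co s * S b s))"
proof -
  let ?P = "\<lambda>T. T \<subseteq> {..<n} \<and> idx_indep n S T"
  have P0: "?P {}" unfolding idx_indep_def by simp
  obtain R where finR: "finite R" and mR: "maximal R ?P"
    using maximal_exists_superset[of "{..<n}" ?P "{}"] P0 by blast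
  have Rn: "R \<subseteq> {..<n}" and iR: "idx_indep n S R" using mR unfolding maximal_def by auto
  have span: "\<forall>a<n. \<exists>co. \<forall>b<n. S b a = (\<Sum>s\<in>R. co s * S b s)"
  proof (intro allI impI)
    fix a assume a: "a < n"
    show "\<exists>co. \<forall>b<n. S b a = (\<Sum>s\<in>R. co s * S b s)"
    proof (cases "a \<in> R")
      case True
      show ?thesis
      proof (intro exI allI impI)
        fix b
        have "(\<Sum>s\<in>R. (if s = a then 1 else 0) * S b s) = (\<Sum>s\<in>R. if s = a then S b s else 0)"
          by (rule sum.cong) auto
        also have "\<dots> = S b a" using True finR by (subst sum.delta) auto
        finally show "S b a = (\<Sum>s\<in>R. (if s = a then 1 else 0) * S b s)" by simp
      qed
    next
      case False
      have "\<not> idx_indep n S (insert a R)"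
      proof
        assume "idx_indep n S (insert a R)"
        hence "insert a R = R" using mR a Rn unfolding maximal_def by blast
        thus False using False by blast
      qed
      then obtain c where c: "\<forall>i<n. (\<Sum>s\<in>insert a R. c s * S i s) = 0" and s0: "\<exists>s\<in>insert a R. c s \<noteq> 0"
        unfolding idx_indep_def by blast
      have c': "\<forall>i<n. c a * S i a + (\<Sum>s\<in>R. c s * S i s) = 0" using c finR False by simp
      have ca: "c a \<noteq> 0"
      proof
        assume "c a = 0"
        hence "\<forall>i<n. (\<Sum>s\<in>R. c s * S i s) = 0" using c' by simp
        hence "\<forall>s\<in>R. c s = 0" using iR unfolding idx_indep_def by blast
        thus False using s0 \<open>c a = 0\<close> by auto
      qed
      show ?thesis
      proof (intro exI allI impI)
        fix b assume b: "b < n"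
        have "S b a = - (\<Sum>s\<in>R. c s * S b s) / c a" using c' b ca by (simp add: eq_neg_iff_add_eq_0 field_simps)
        also have "\<dots> = (\<Sum>s\<in>R. (- c s / c a) * S b s)" by (simp add: sum_divide_distrib sum_negf)
        finally show "S b a = (\<Sum>s\<in>R. (- c s / c a) * S b s)" .
      qed
    qed
  qed
  define colv where "colv s = vec n (\<lambda>i. S i s)" for s
  define I where "I = Inl ` R \<union> Inr ` J"
  define vf where "vf t = (case t of Inl s \<Rightarrow> colv s | Inr j \<Rightarrow> zf j)" for t
  have finI: "finite I" unfolding I_def using finR finJ by auto
  have cardI: "card I = card R + card J"
    unfolding I_def by (subst card_Un_disjoint) (auto simp: finR finJ card_image)
  have vc: "\<forall>t\<in>I. vf t \<in> carrier_vec n" unfolding I_def vf_def colv_def using zc by auto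
  have indI: "indep_fam n I vf"
    unfolding indep_fam_def
  proof (intro allI impI)
    fix c assume h: "\<forall>i<n. (\<Sum>t\<in>I. c t * vf t $ i) = 0"
    define x where "x i = (\<Sum>s\<in>R. c (Inl s) * S i s)" for i
    define y where "y i = (\<Sum>j\<in>J. c (Inr j) * zf j $ i)" for i
    have xy: "x i + y i = 0" if i: "i < n" for i
    proof -
      have "(\<Sum>t\<in>I. c t * vf t $ i) = (\<Sum>t\<in>Inl ` R. c t * vf t $ i) + (\<Sum>t\<in>Inr ` J. c t * vf t $ i)"
        unfolding I_def by (rule sum.union_disjoint) (auto simp: finR finJ)
      also have "\<dots> = x i + y i"
        unfolding x_def y_def vf_def colv_def using i
        by (simp add: sum.reindex)
      finally show ?thesis using h i by simp
    qed
    have orth: "(\<Sum>i<n. x i * y i) = 0"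
    proof -
      have "(\<Sum>i<n. x i * y i) = (\<Sum>i<n. \<Sum>s\<in>R. \<Sum>j\<in>J. c (Inl s) * c (Inr j) * (S i s * zf j $ i))"
        unfolding x_def y_def by (simp add: sum_product mult_ac)
      also have "\<dots> = (\<Sum>s\<in>R. \<Sum>j\<in>J. c (Inl s) * c (Inr j) * (\<Sum>i<n. S i s * zf j $ i))"
        by (subst sum_swap3[symmetric]) (simp add: sum_distrib_left)
      also have "\<dots> = 0"
      proof -
        have "(\<Sum>i<n. S i s * zf j $ i) = 0" if "s \<in> R" "j \<in> J" for s j
        proof -
          have "(\<Sum>i<n. S i s * zf j $ i) = (\<Sum>i<n. S s i * zf j $ i)"
            using sym that Rn unfolding fsym_def by (auto intro!: sum.cong)
          thus ?thesis using ker that Rn by auto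
        qed
        thus ?thesis by simp
      qed
      finally show ?thesis .
    qed
    have "(\<Sum>i<n. x i * x i) = 0"
    proof -
      have "(\<Sum>i<n. x i * x i) = (\<Sum>i<n. - (x i * y i))"
        using xy by (intro sum.cong) (auto simp: eq_neg_iff_add_eq_0[symmetric])
      thus ?thesis using orth by (simp add: sum_negf)
    qed
    hence x0: "\<forall>i<n. x i = 0"
      using sum_nonneg_eq_0_iff[of "{..<n}" "\<lambda>i. x i * x i"] by simp
    hence hx: "\<forall>i<n. (\<Sum>s\<in>R. (\<lambda>s. c (Inl s)) s * S i s) = 0" unfolding x_def by simp
    have iR': "(\<forall>i<n. (\<Sum>s\<in>R. (\<lambda>s. c (Inl s)) s * S i s) = 0) \<longrightarrow> (\<forall>s\<in>R. (\<lambda>s. c (Inl s)) s = 0)"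
      using iR unfolding idx_indep_def by (rule spec)
    have cR: "\<forall>s\<in>R. c (Inl s) = 0" using mp[OF iR' hx] by simp
    have "\<forall>i<n. y i = 0" using x0 xy by auto
    hence hy: "\<forall>i<n. (\<Sum>j\<in>J. (\<lambda>j. c (Inr j)) j * zf j $ i) = 0" unfolding y_def by simp
    have iJ': "(\<forall>i<n. (\<Sum>j\<in>J. (\<lambda>j. c (Inr j)) j * zf j $ i) = 0) \<longrightarrow> (\<forall>j\<in>J. (\<lambda>j. c (Inr j)) j = 0)"
      using ind unfolding indep_fam_def by (rule spec)
    have cJ: "\<forall>j\<in>J. c (Inr j) = 0" using mp[OF iJ' hy] by simp
    show "\<forall>t\<in>I. c t = 0" unfolding I_def using cR cJ by auto
  qed
  have "card I \<le> n" by (rule indep_fam_card_le[OF finI vc indI])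
  thus ?thesis using Rn span cardI by auto
qed

lemma tau_Suc: "tau (Suc r) = tau r + Suc r"
  unfolding tau_def by (simp add: numeral_2_eq_2)

lemma tau_mono: "r \<le> s \<Longrightarrow> tau r \<le> tau s"
proof (induction s)
  case 0 thus ?case by simp
next
  case (Suc s) thus ?case by (cases "r = Suc s") (auto simp: tau_Suc)
qed

definition upairs :: "nat set \<Rightarrow> (nat \<times> nat) set" where
  "upairs X = {(a, b). a \<in> X \<and> b \<in> X \<and> a \<le> b}"

lemma card_upairs: "finite X \<Longrightarrow> card (upairs X) = tau (card X)"
proof (induction X rule: finite_linorder_max_induct)
  case empty
  then show ?case by (simp add: upairs_def tau_def)
next
  case (insert b A)
  have bA: "b \<notin> A" using insert by auto
  have eq: "upairs (insert b A) = upairs A \<union> (\<lambda>a. (a, b)) ` insert b A"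
    unfolding upairs_def using insert.hyps(2) by (auto simp: less_imp_le)
  have fin: "finite (upairs A)" unfolding upairs_def
    by (rule finite_subset[of _ "A \<times> A"]) (use insert in auto)
  have disj: "upairs A \<inter> (\<lambda>a. (a, b)) ` insert b A = {}" unfolding upairs_def using bA by auto
  have "card (upairs (insert b A)) = card (upairs A) + card ((\<lambda>a. (a, b)) ` insert b A)"
    unfolding eq by (rule card_Un_disjoint) (use fin insert disj in auto)
  also have "card ((\<lambda>a. (a, b)) ` insert b A) = card (insert b A)"
    by (rule card_image) (auto simp: inj_on_def)
  finally show ?case using insert bA by (simp add: tau_Suc)
qed

definition Tri :: "nat \<Rightarrow> (nat \<Rightarrow> nat) \<Rightarrow> (nat \<times> nat \<times> nat) set" where
  "Tri l n = {(j, a, a'). j < l \<and> a \<le> a' \<and> a' < n j}"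

definition Epairs :: "nat \<Rightarrow> (nat \<Rightarrow> nat) \<Rightarrow> (nat \<Rightarrow> nat set) \<Rightarrow> (nat \<times> nat \<times> nat) set" where
  "Epairs l n Rs = {(j, a, a'). j < l \<and> a \<le> a' \<and> a' < n j \<and> a \<notin> Rs j \<and> a' \<notin> Rs j}"

definition Pset :: "nat \<Rightarrow> (nat \<Rightarrow> nat) \<Rightarrow> nat \<Rightarrow> (nat \<Rightarrow> nat set) \<Rightarrow> ((nat \<times> nat \<times> nat) + nat) set" where
  "Pset l n m Rs = Inl ` (Tri l n - Epairs l n Rs) \<union> Inr ` {..<m}"

lemma finite_Tri: "finite (Tri l n)"
proof -
  have "Tri l n \<subseteq> {..<l} \<times> {..<Max (n ` {..<l})} \<times> {..<Max (n ` {..<l})}"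
    unfolding Tri_def by (auto, (meson Max_ge finite_imageI finite_lessThan image_eqI lessThan_iff order_less_le_trans le_less_trans)+)
  thus ?thesis by (rule finite_subset) auto
qed

lemma card_Epairs:
  assumes "\<And>j. j < l \<Longrightarrow> Rs j \<subseteq> {..<n j}"
  shows "card (Epairs l n Rs) = (\<Sum>j<l. tau (n j - card (Rs j)))"
proof -
  have eq: "Epairs l n Rs = (\<Union>j<l. (\<lambda>(a, a'). (j, a, a')) ` upairs ({..<n j} - Rs j))"
    unfolding Epairs_def upairs_def by auto
  have "card (Epairs l n Rs) = (\<Sum>j<l. card ((\<lambda>(a, a'). (j, a, a')) ` upairs ({..<n j} - Rs j)))"
    unfolding eq
  proof (rule card_UN_disjoint)
    show "\<forall>j\<in>{..<l}. finite ((\<lambda>(a, a'). (j, a, a')) ` upairs ({..<n j} - Rs j))"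
    proof
      fix j
      have "upairs ({..<n j} - Rs j) \<subseteq> {..<n j} \<times> {..<n j}" unfolding upairs_def by auto
      hence "finite (upairs ({..<n j} - Rs j))" by (rule finite_subset) auto
      thus "finite ((\<lambda>(a, a'). (j, a, a')) ` upairs ({..<n j} - Rs j))" by simp
    qed
  qed auto
  also have "\<dots> = (\<Sum>j<l. card (upairs ({..<n j} - Rs j)))"
    by (intro sum.cong refl card_image) (auto simp: inj_on_def)
  also have "\<dots> = (\<Sum>j<l. tau (n j - card (Rs j)))"
  proof (intro sum.cong refl)
    fix j assume j: "j \<in> {..<l}"
    have "card ({..<n j} - Rs j) = n j - card (Rs j)"
      using assms[of j] j by (subst card_Diff_subset) (auto intro: finite_subset)
    thus "card (upairs ({..<n j} - Rs j)) = tau (n j - card (Rs j))" by (simp add: card_upairs)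
  qed
  finally show ?thesis .
qed

lemma card_Pset_less:
  assumes R: "\<And>j. j < l \<Longrightarrow> Rs j \<subseteq> {..<n j}"
    and cnt: "int m - int d < (\<Sum>j<l. int (tau (n j - card (Rs j))))"
  shows "card (Pset l n m Rs) < card (cost_coords l n d)"
proof -
  have ES: "Epairs l n Rs \<subseteq> Tri l n" unfolding Epairs_def Tri_def by auto
  have finE: "finite (Epairs l n Rs)" using finite_subset[OF ES finite_Tri] .
  have cP: "card (Pset l n m Rs) = card (Tri l n) - card (Epairs l n Rs) + m"
    unfolding Pset_def
    by (subst card_Un_disjoint) (auto simp: card_image card_Diff_subset[OF finE ES] finite_Tri)
  have cQ: "card (cost_coords l n d) = card (Tri l n) + d"
    unfolding cost_coords_def Tri_def[symmetric]
    by (subst card_Un_disjoint) (auto simp: card_image finite_Tri)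
  have "int (card (Epairs l n Rs)) = (\<Sum>j<l. int (tau (n j - card (Rs j))))"
    using card_Epairs[OF R] by simp
  hence "int m < int d + int (card (Epairs l n Rs))" using cnt by simp
  moreover have "card (Epairs l n Rs) \<le> card (Tri l n)" by (rule card_mono[OF finite_Tri ES])
  ultimately show ?thesis unfolding cP cQ by linarith
qed

definition cube :: "'a set \<Rightarrow> real \<Rightarrow> ('a \<Rightarrow> real) set" where
  "cube P r = PiE P (\<lambda>_. {-r..r})"

lemma grid_approx:
  fixes r t :: real and M :: nat
  assumes r: "0 < r" and M: "1 \<le> M" and t: "-r \<le> t" "t \<le> r"
  defines "k \<equiv> min (M - 1) (nat \<lfloor>(t + r) * M / (2 * r)\<rfloor>)"
  shows "k < M" "\<bar>t - (-r + 2 * r * real k / M)\<bar> \<le> 2 * r / M"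
proof -
  show "k < M" unfolding k_def using M by auto
  define s where "s = (t + r) * M / (2 * r)"
  have s0: "0 \<le> s" unfolding s_def using r t M by auto
  have sM: "s \<le> M" unfolding s_def using r t M by (auto simp: field_simps)
  have ks: "real k \<le> s"
  proof -
    have "real k \<le> real (nat \<lfloor>s\<rfloor>)" unfolding k_def s_def by simp
    also have "\<dots> \<le> s" using s0 by simp
    finally show ?thesis .
  qed
  have sk: "s - real k \<le> 1"
  proof (cases "nat \<lfloor>s\<rfloor> \<le> M - 1")
    case True
    hence "k = nat \<lfloor>s\<rfloor>" unfolding k_def s_def by simp
    thus ?thesis using s0 by linarith
  next
    case False
    hence "k = M - 1" unfolding k_def s_def by simp
    thus ?thesis using sM M by simp
  qed
  have eq: "t - (-r + 2 * r * real k / M) = (s - real k) * (2 * r / M)"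
    unfolding s_def using r M by (simp add: field_simps)
  have "0 \<le> (s - real k) * (2 * r / M)" using ks r by simp
  moreover have "(s - real k) * (2 * r / M) \<le> 1 * (2 * r / M)"
    by (rule mult_right_mono) (use sk r in auto)
  ultimately show "\<bar>t - (-r + 2 * r * real k / M)\<bar> \<le> 2 * r / M" unfolding eq by simp
qed

lemma lowdim_null_cube:
  fixes F :: "('a \<Rightarrow> real) \<Rightarrow> 'b \<Rightarrow> real"
  assumes finP: "finite P" and finQ: "finite Q" and pq: "card P < card Q"
    and r: "0 < r" and L: "0 \<le> L"
    and lip: "\<forall>x\<in>cube P r. \<forall>y\<in>cube P r. \<forall>q\<in>Q. \<bar>F x q - F y q\<bar> \<le> L * (\<Sum>i\<in>P. \<bar>x i - y i\<bar>)"
  shows "\<exists>N\<in>null_sets (PiM Q (\<lambda>_. lborel)). (\<lambda>x. restrict (F x) Q) ` cube P r \<subseteq> N"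
proof -
  interpret product_sigma_finite "\<lambda>_::'b. lborel" by standard
  let ?M = "PiM Q (\<lambda>_::'b. lborel)"
  define z where "z M g = restrict (\<lambda>i. -r + 2 * r * real (g i) / real M) P" for M :: nat and g :: "'a \<Rightarrow> nat"
  define \<delta> where "\<delta> M = L * card P * (2 * r / M)" for M :: nat
  define Box where "Box M g = PiE Q (\<lambda>q. {F (z M g) q - \<delta> M .. F (z M g) q + \<delta> M})" for M g
  define G where "G M = PiE P (\<lambda>_. {..<M})" for M :: nat
  define U where "U M = (\<Union>g\<in>G M. Box M g)" for M
  define N where "N = (\<Inter>M. U (Suc M))"
  have d0: "0 \<le> \<delta> M" for M unfolding \<delta>_def using L r by simp
  have Boxs: "Box M g \<in> sets ?M" for M g unfolding Box_def by (rule sets_PiM_I_finite) (auto simp: finQ)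
  have finG: "finite (G M)" for M unfolding G_def using finP by (simp add: finite_PiE)
  have Us: "U M \<in> sets ?M" for M unfolding U_def using finG Boxs by auto
  have Ns: "N \<in> sets ?M" unfolding N_def using Us by (intro sets.countable_INT) auto
  have cover: "restrict (F x) Q \<in> U M" if x: "x \<in> cube P r" and M: "1 \<le> M" for x M
  proof -
    define g where "g = restrict (\<lambda>i. min (M - 1) (nat \<lfloor>(x i + r) * M / (2 * r)\<rfloor>)) P"
    have xi: "-r \<le> x i" "x i \<le> r" if "i \<in> P" for i using x that unfolding cube_def by auto
    have gG: "g \<in> G M" unfolding G_def g_def using grid_approx(1)[OF r M xi] by auto
    have zc: "z M g \<in> cube P r"
      unfolding cube_def z_def
    proof (rule restrict_PiE_iff[THEN iffD2], intro ballI)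
      fix i assume i: "i \<in> P"
      have gi: "g i < M" using gG i unfolding G_def by auto
      have "0 \<le> 2 * r * real (g i) / real M" using r by simp
      moreover have "2 * r * real (g i) / real M \<le> 2 * r"
        using gi r M by (simp add: field_simps)
      ultimately show "-r + 2 * r * real (g i) / real M \<in> {-r..r}" by simp
    qed
    have close: "\<bar>x i - z M g i\<bar> \<le> 2 * r / M" if i: "i \<in> P" for i
      using grid_approx(2)[OF r M xi[OF i]] i unfolding z_def g_def by simp
    have "restrict (F x) Q \<in> Box M g"
      unfolding Box_def
    proof (rule restrict_PiE_iff[THEN iffD2], intro ballI)
      fix q assume q: "q \<in> Q"
      have "\<bar>F x q - F (z M g) q\<bar> \<le> L * (\<Sum>i\<in>P. \<bar>x i - z M g i\<bar>)" using lip x zc q by blast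
      also have "\<dots> \<le> L * (\<Sum>i\<in>P. 2 * r / M)" by (intro mult_left_mono sum_mono close L) 
      also have "\<dots> = \<delta> M" unfolding \<delta>_def by simp
      finally show "F x q \<in> {F (z M g) q - \<delta> M..F (z M g) q + \<delta> M}" by auto
    qed
    thus ?thesis unfolding U_def using gG by auto
  qed
  define K where "K = (4 * L * card P * r) ^ card Q"
  have emB: "emeasure ?M (Box M g) = ennreal ((2 * \<delta> M) ^ card Q)" for M g
  proof -
    have "emeasure ?M (Box M g) = (\<Prod>q\<in>Q. emeasure lborel {F (z M g) q - \<delta> M .. F (z M g) q + \<delta> M})"
      unfolding Box_def by (rule emeasure_PiM[OF finQ]) auto
    also have "\<dots> = (\<Prod>q\<in>Q. ennreal (2 * \<delta> M))" using d0[of M] by (intro prod.cong) auto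
    also have "\<dots> = ennreal ((2 * \<delta> M) ^ card Q)" by (simp add: prod_ennreal ennreal_power d0)
    finally show ?thesis .
  qed
  have emU: "emeasure ?M (U M) \<le> ennreal (K / M)" if M: "1 \<le> M" for M
  proof -
    have "emeasure ?M (U M) \<le> (\<Sum>g\<in>G M. emeasure ?M (Box M g))"
      unfolding U_def by (rule emeasure_subadditive_finite[OF finG]) (use Boxs in auto)
    also have "\<dots> = ennreal (real (card (G M)) * (2 * \<delta> M) ^ card Q)"
      by (simp add: emB ennreal_mult' d0 ennreal_of_nat_eq_real_of_nat)
    also have "real (card (G M)) = real M ^ card P" unfolding G_def using finP by (simp add: card_PiE)
    also have "real M ^ card P * (2 * \<delta> M) ^ card Q \<le> K / M"
    proof -
      have "(2 * \<delta> M) = (4 * L * card P * r) / M" unfolding \<delta>_def by simp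
      hence "real M ^ card P * (2 * \<delta> M) ^ card Q = K * (real M ^ card P / real M ^ card Q)"
        unfolding K_def by (simp add: power_divide)
      also have "\<dots> \<le> K * (1 / M)"
      proof (rule mult_left_mono)
        show "0 \<le> K" unfolding K_def using L r by simp
        have "real M ^ Suc (card P) \<le> real M ^ card Q" by (rule power_increasing) (use pq M in auto)
        thus "real M ^ card P / real M ^ card Q \<le> 1 / M" using M by (simp add: field_simps)
      qed
      finally show ?thesis by simp
    qed
    finally show ?thesis by (simp add: ennreal_leI)
  qed
  have emN: "emeasure ?M N = 0"
  proof -
    have "emeasure ?M N \<le> 0"
    proof (rule ennreal_le_epsilon)
      fix e :: real assume e: "0 < e"
      define M where "M = Suc (nat \<lceil>K / e\<rceil>)"
      have KM: "K / M \<le> e"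
      proof -
        have K0: "0 \<le> K" unfolding K_def using L r by simp
        have "K / e \<le> M" unfolding M_def by linarith
        hence "K \<le> e * M" using e by (simp add: field_simps)
        thus ?thesis unfolding M_def using e by (simp add: field_simps)
      qed
      have "emeasure ?M N \<le> emeasure ?M (U M)"
        by (rule emeasure_mono) (auto simp: N_def M_def Us)
      also have "\<dots> \<le> ennreal (K / M)" by (rule emU) (simp add: M_def)
      also have "\<dots> \<le> ennreal e" using KM by (rule ennreal_leI)
      finally show "emeasure ?M N \<le> 0 + ennreal e" by simp
    qed
    thus ?thesis by simp
  qed
  have "N \<in> null_sets ?M" using emN Ns by auto
  moreover have "(\<lambda>x. restrict (F x) Q) ` cube P r \<subseteq> N"
    unfolding N_def using cover by auto
  ultimately show ?thesis by blast
qed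

lemma lowdim_null:
  fixes F :: "('a \<Rightarrow> real) \<Rightarrow> 'b \<Rightarrow> real"
  assumes finP: "finite P" and finQ: "finite Q" and pq: "card P < card Q"
    and lip: "\<And>r. \<exists>L. \<forall>x\<in>cube P r. \<forall>y\<in>cube P r. \<forall>q\<in>Q. \<bar>F x q - F y q\<bar> \<le> L * (\<Sum>i\<in>P. \<bar>x i - y i\<bar>)"
  shows "\<exists>N\<in>null_sets (PiM Q (\<lambda>_. lborel)). (\<lambda>x. restrict (F x) Q) ` PiE P (\<lambda>_. UNIV) \<subseteq> N"
proof -
  let ?M = "PiM Q (\<lambda>_::'b. lborel)"
  have "\<forall>R::nat. \<exists>N\<in>null_sets ?M. (\<lambda>x. restrict (F x) Q) ` cube P (real (Suc R)) \<subseteq> N"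
  proof
    fix R :: nat
    obtain L where L: "\<forall>x\<in>cube P (real (Suc R)). \<forall>y\<in>cube P (real (Suc R)). \<forall>q\<in>Q. \<bar>F x q - F y q\<bar> \<le> L * (\<Sum>i\<in>P. \<bar>x i - y i\<bar>)"
      using lip by blast
    have L': "\<forall>x\<in>cube P (real (Suc R)). \<forall>y\<in>cube P (real (Suc R)). \<forall>q\<in>Q. \<bar>F x q - F y q\<bar> \<le> max L 0 * (\<Sum>i\<in>P. \<bar>x i - y i\<bar>)"
    proof (intro ballI)
      fix x y q assume h: "x \<in> cube P (real (Suc R))" "y \<in> cube P (real (Suc R))" "q \<in> Q"
      have "L * (\<Sum>i\<in>P. \<bar>x i - y i\<bar>) \<le> max L 0 * (\<Sum>i\<in>P. \<bar>x i - y i\<bar>)"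
        by (rule mult_right_mono) (auto intro: sum_nonneg)
      thus "\<bar>F x q - F y q\<bar> \<le> max L 0 * (\<Sum>i\<in>P. \<bar>x i - y i\<bar>)" using L h by force
    qed
    show "\<exists>N\<in>null_sets ?M. (\<lambda>x. restrict (F x) Q) ` cube P (real (Suc R)) \<subseteq> N"
      by (rule lowdim_null_cube[OF finP finQ pq _ _ L']) auto
  qed
  then obtain NN where NN: "\<And>R. NN R \<in> null_sets ?M" "\<And>R. (\<lambda>x. restrict (F x) Q) ` cube P (real (Suc R)) \<subseteq> NN R"
    by metis
  have "(\<Union>R. NN R) \<in> null_sets ?M" using NN(1) by (intro null_sets_UN) auto
  moreover have "(\<lambda>x. restrict (F x) Q) ` PiE P (\<lambda>_. UNIV) \<subseteq> (\<Union>R. NN R)"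
  proof
    fix y assume "y \<in> (\<lambda>x. restrict (F x) Q) ` PiE P (\<lambda>_. UNIV)"
    then obtain x where x: "x \<in> PiE P (\<lambda>_. UNIV)" and y: "y = restrict (F x) Q" by auto
    define R where "R = nat \<lceil>\<Sum>i\<in>P. \<bar>x i\<bar>\<rceil>"
    have "x \<in> cube P (real (Suc R))"
      unfolding cube_def
    proof (rule PiE_I)
      fix i assume i: "i \<in> P"
      have "\<bar>x i\<bar> \<le> (\<Sum>i\<in>P. \<bar>x i\<bar>)" by (rule member_le_sum) (use i finP in auto)
      also have "\<dots> \<le> real (Suc R)" unfolding R_def by linarith
      finally show "x i \<in> {- real (Suc R)..real (Suc R)}" by auto
    next
      fix i assume "i \<notin> P" thus "x i = undefined" using x by auto
    qed
    thus "y \<in> (\<Union>R. NN R)" using NN(2)[of R] y by auto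
  qed
  ultimately show ?thesis by blast
qed

definition lipb :: "'a set \<Rightarrow> (('a \<Rightarrow> real) \<Rightarrow> real) \<Rightarrow> bool" where
  "lipb P g \<longleftrightarrow> (\<forall>r. \<exists>B L. 0 \<le> B \<and> 0 \<le> L \<and> (\<forall>x\<in>cube P r. \<bar>g x\<bar> \<le> B) \<and>
      (\<forall>x\<in>cube P r. \<forall>y\<in>cube P r. \<bar>g x - g y\<bar> \<le> L * (\<Sum>i\<in>P. \<bar>x i - y i\<bar>)))"

lemma lipb_const: "lipb P (\<lambda>_. c)"
  unfolding lipb_def by (intro allI exI[of _ "\<bar>c\<bar>"] exI[of _ 0]) auto

lemma lipb_proj:
  assumes "finite P" "i \<in> P" shows "lipb P (\<lambda>x. x i)"
  unfolding lipb_def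
proof
  fix r
  have b: "\<forall>x\<in>cube P r. \<bar>x i\<bar> \<le> \<bar>r\<bar>"
  proof
    fix x assume "x \<in> cube P r"
    hence "x i \<in> {-r..r}" using assms(2) unfolding cube_def by (auto simp: PiE_iff)
    thus "\<bar>x i\<bar> \<le> \<bar>r\<bar>" by auto
  qed
  have l: "\<forall>x\<in>cube P r. \<forall>y\<in>cube P r. \<bar>x i - y i\<bar> \<le> 1 * (\<Sum>i\<in>P. \<bar>x i - y i\<bar>)"
  proof (intro ballI)
    fix x y :: "'a \<Rightarrow> real"
    show "\<bar>x i - y i\<bar> \<le> 1 * (\<Sum>i\<in>P. \<bar>x i - y i\<bar>)"
      using member_le_sum[of i P "\<lambda>j. \<bar>x j - y j\<bar>"] assms by simp
  qed
  show "\<exists>B L. 0 \<le> B \<and> 0 \<le> L \<and> (\<forall>x\<in>cube P r. \<bar>x i\<bar> \<le> B) \<and>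
      (\<forall>x\<in>cube P r. \<forall>y\<in>cube P r. \<bar>x i - y i\<bar> \<le> L * (\<Sum>i\<in>P. \<bar>x i - y i\<bar>))"
    using b l by (intro exI[of _ "\<bar>r\<bar>"] exI[of _ 1]) auto
qed

lemma lipb_add:
  assumes "lipb P g" "lipb P h" shows "lipb P (\<lambda>x. g x + h x)"
  unfolding lipb_def
proof
  fix r
  obtain B1 L1 where 1: "0 \<le> B1" "0 \<le> L1" "\<forall>x\<in>cube P r. \<bar>g x\<bar> \<le> B1"
      "\<forall>x\<in>cube P r. \<forall>y\<in>cube P r. \<bar>g x - g y\<bar> \<le> L1 * (\<Sum>i\<in>P. \<bar>x i - y i\<bar>)"
    using assms(1) unfolding lipb_def by blast
  obtain B2 L2 where 2: "0 \<le> B2" "0 \<le> L2" "\<forall>x\<in>cube P r. \<bar>h x\<bar> \<le> B2"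
      "\<forall>x\<in>cube P r. \<forall>y\<in>cube P r. \<bar>h x - h y\<bar> \<le> L2 * (\<Sum>i\<in>P. \<bar>x i - y i\<bar>)"
    using assms(2) unfolding lipb_def by blast
  show "\<exists>B L. 0 \<le> B \<and> 0 \<le> L \<and> (\<forall>x\<in>cube P r. \<bar>g x + h x\<bar> \<le> B) \<and>
      (\<forall>x\<in>cube P r. \<forall>y\<in>cube P r. \<bar>g x + h x - (g y + h y)\<bar> \<le> L * (\<Sum>i\<in>P. \<bar>x i - y i\<bar>))"
  proof -
    have bb: "\<forall>x\<in>cube P r. \<bar>g x + h x\<bar> \<le> B1 + B2" using 1(3) 2(3) by (smt (verit))
    have ll: "\<bar>g x + h x - (g y + h y)\<bar> \<le> (L1 + L2) * (\<Sum>i\<in>P. \<bar>x i - y i\<bar>)"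
      if x: "x \<in> cube P r" and y: "y \<in> cube P r" for x y
    proof -
    have "\<bar>g x + h x - (g y + h y)\<bar> \<le> \<bar>g x - g y\<bar> + \<bar>h x - h y\<bar>" by simp
    also have "\<dots> \<le> L1 * (\<Sum>i\<in>P. \<bar>x i - y i\<bar>) + L2 * (\<Sum>i\<in>P. \<bar>x i - y i\<bar>)"
      using 1(4) 2(4) x y by (meson add_mono)
    finally show ?thesis by (simp add: distrib_right)
    qed
    show ?thesis using bb ll 1 2 by (intro exI[of _ "B1 + B2"] exI[of _ "L1 + L2"]) auto
  qed
qed

lemma lipb_mult:
  assumes "lipb P g" "lipb P h" shows "lipb P (\<lambda>x. g x * h x)"
  unfolding lipb_def
proof
  fix r
  obtain B1 L1 where 1: "0 \<le> B1" "0 \<le> L1" "\<forall>x\<in>cube P r. \<bar>g x\<bar> \<le> B1"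
      "\<forall>x\<in>cube P r. \<forall>y\<in>cube P r. \<bar>g x - g y\<bar> \<le> L1 * (\<Sum>i\<in>P. \<bar>x i - y i\<bar>)"
    using assms(1) unfolding lipb_def by blast
  obtain B2 L2 where 2: "0 \<le> B2" "0 \<le> L2" "\<forall>x\<in>cube P r. \<bar>h x\<bar> \<le> B2"
      "\<forall>x\<in>cube P r. \<forall>y\<in>cube P r. \<bar>h x - h y\<bar> \<le> L2 * (\<Sum>i\<in>P. \<bar>x i - y i\<bar>)"
    using assms(2) unfolding lipb_def by blast
  show "\<exists>B L. 0 \<le> B \<and> 0 \<le> L \<and> (\<forall>x\<in>cube P r. \<bar>g x * h x\<bar> \<le> B) \<and>
      (\<forall>x\<in>cube P r. \<forall>y\<in>cube P r. \<bar>g x * h x - g y * h y\<bar> \<le> L * (\<Sum>i\<in>P. \<bar>x i - y i\<bar>))"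
  proof -
    have bb: "\<forall>x\<in>cube P r. \<bar>g x * h x\<bar> \<le> B1 * B2" using 1(3) 2(3) by (simp add: abs_mult mult_mono')
    have ll: "\<bar>g x * h x - g y * h y\<bar> \<le> (B1 * L2 + B2 * L1) * (\<Sum>i\<in>P. \<bar>x i - y i\<bar>)"
      if x: "x \<in> cube P r" and y: "y \<in> cube P r" for x y
    proof -
    define D where "D = (\<Sum>i\<in>P. \<bar>x i - y i\<bar>)"
    have "g x * h x - g y * h y = g x * (h x - h y) + h y * (g x - g y)" by (simp add: algebra_simps)
    hence "\<bar>g x * h x - g y * h y\<bar> \<le> \<bar>g x\<bar> * \<bar>h x - h y\<bar> + \<bar>h y\<bar> * \<bar>g x - g y\<bar>"
      by (simp add: abs_mult[symmetric] abs_triangle_ineq)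
    also have "\<dots> \<le> B1 * (L2 * D) + B2 * (L1 * D)"
      using 1 2 x y unfolding D_def by (intro add_mono mult_mono) auto
    finally show ?thesis unfolding D_def by (simp add: algebra_simps)
    qed
    show ?thesis using bb ll 1 2 by (intro exI[of _ "B1 * B2"] exI[of _ "B1 * L2 + B2 * L1"]) auto
  qed
qed

lemma lipb_sum:
  assumes "finite S" "\<And>s. s \<in> S \<Longrightarrow> lipb P (g s)"
  shows "lipb P (\<lambda>x. \<Sum>s\<in>S. g s x)"
  using assms
proof (induction S rule: finite_induct)
  case empty thus ?case using lipb_const[of P 0] by simp
next
  case (insert s S)
  thus ?case using lipb_add[of P "g s" "\<lambda>x. \<Sum>s\<in>S. g s x"] by simp
qed

lemma lipb_family:
  assumes finQ: "finite Q" and lq: "\<forall>q\<in>Q. lipb P (\<lambda>x. F x q)"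
  shows "\<exists>L. \<forall>x\<in>cube P r. \<forall>y\<in>cube P r. \<forall>q\<in>Q. \<bar>F x q - F y q\<bar> \<le> L * (\<Sum>i\<in>P. \<bar>x i - y i\<bar>)"
proof -
  have "\<forall>q\<in>Q. \<exists>L. 0 \<le> L \<and> (\<forall>x\<in>cube P r. \<forall>y\<in>cube P r. \<bar>F x q - F y q\<bar> \<le> L * (\<Sum>i\<in>P. \<bar>x i - y i\<bar>))"
    using lq unfolding lipb_def by blast
  then obtain Lf where Lf: "\<forall>q\<in>Q. 0 \<le> Lf q \<and> (\<forall>x\<in>cube P r. \<forall>y\<in>cube P r. \<bar>F x q - F y q\<bar> \<le> Lf q * (\<Sum>i\<in>P. \<bar>x i - y i\<bar>))"
    by metis
  show ?thesis
  proof (intro exI[of _ "\<Sum>q\<in>Q. Lf q"] ballI)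
    fix x y q assume x: "x \<in> cube P r" and y: "y \<in> cube P r" and q: "q \<in> Q"
    have "\<bar>F x q - F y q\<bar> \<le> Lf q * (\<Sum>i\<in>P. \<bar>x i - y i\<bar>)" using Lf x y q by blast
    also have "\<dots> \<le> (\<Sum>q\<in>Q. Lf q) * (\<Sum>i\<in>P. \<bar>x i - y i\<bar>)"
      by (rule mult_right_mono) (use Lf q finQ in \<open>auto intro: member_le_sum sum_nonneg\<close>)
    finally show "\<bar>F x q - F y q\<bar> \<le> (\<Sum>q\<in>Q. Lf q) * (\<Sum>i\<in>P. \<bar>x i - y i\<bar>)" .
  qed
qed

type_synonym coord = "(nat \<times> nat \<times> nat) + nat"

definition Hf :: "(nat \<Rightarrow> nat set) \<Rightarrow> (coord \<Rightarrow> real) \<Rightarrow> nat \<Rightarrow> nat \<Rightarrow> nat \<Rightarrow> real" where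
  "Hf Rs w j a s = (if a \<in> Rs j then (if a = s then 1 else 0) else w (Inl (j, min a s, max a s)))"

definition Fmap :: "nat \<Rightarrow> (nat \<Rightarrow> nat \<Rightarrow> real mat) \<Rightarrow> (nat \<Rightarrow> real vec) \<Rightarrow> (nat \<Rightarrow> nat set)
    \<Rightarrow> (coord \<Rightarrow> real) \<Rightarrow> coord \<Rightarrow> real" where
  "Fmap m A A0 Rs w q = (case q of
      Inl (j, a, a') \<Rightarrow> (\<Sum>s\<in>Rs j. \<Sum>t\<in>Rs j. Hf Rs w j a s * Hf Rs w j a' t * w (Inl (j, min s t, max s t)))
                       + (\<Sum>i<m. w (Inr i) * A i j $$ (a, a'))
    | Inr t \<Rightarrow> (\<Sum>i<m. w (Inr i) * A0 i $ t))"

lemma finite_Pset: "finite (Pset l n m Rs)"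
  unfolding Pset_def using finite_Tri by auto

lemma finite_cost_coords: "finite (cost_coords l n d)"
  unfolding cost_coords_def Tri_def[symmetric] using finite_Tri by auto

lemma Pset_Inl:
  assumes "j < l" "a \<le> a'" "a' < n j" "a \<in> Rs j \<or> a' \<in> Rs j"
  shows "Inl (j, a, a') \<in> Pset l n m Rs"
  using assms unfolding Pset_def Tri_def Epairs_def by auto

lemma Pset_Inr: "i < m \<Longrightarrow> Inr i \<in> Pset l n m Rs"
  unfolding Pset_def by auto

lemma Fmap_lipb:
  assumes R: "\<And>j. j < l \<Longrightarrow> Rs j \<subseteq> {..<n j}" and q: "q \<in> cost_coords l n d"
  shows "lipb (Pset l n m Rs) (\<lambda>w. Fmap m A A0 Rs w q)"
proof -
  let ?P = "Pset l n m Rs"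
  have fP: "finite ?P" by (rule finite_Pset)
  have lamL: "lipb ?P (\<lambda>w. \<Sum>i<m. w (Inr i) * c i)" for c :: "nat \<Rightarrow> real"
    by (intro lipb_sum lipb_mult lipb_proj lipb_const fP) (auto intro: Pset_Inr)
  show ?thesis
  proof (cases q)
    case (Inr t)
    thus ?thesis unfolding Fmap_def using lamL by simp
  next
    case (Inl jaa)
    then obtain j a a' where qj: "q = Inl (j, a, a')" by (cases jaa) auto
    hence j: "j < l" "a \<le> a'" "a' < n j" using q unfolding cost_coords_def by auto
    have finR: "finite (Rs j)" using R[OF j(1)] finite_subset by blast
    have H: "lipb ?P (\<lambda>w. Hf Rs w j b s)" if b: "b < n j" and s: "s \<in> Rs j" for b s
    proof (cases "b \<in> Rs j")
      case True thus ?thesis unfolding Hf_def using lipb_const[of ?P 1] lipb_const[of ?P 0] by simp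
    next
      case False
      have "Inl (j, min b s, max b s) \<in> ?P"
        using s R[OF j(1)] b j(1) by (intro Pset_Inl) (auto simp: min_def max_def)
      thus ?thesis unfolding Hf_def using False lipb_proj[OF fP] by simp
    qed
    have T: "lipb ?P (\<lambda>w. w (Inl (j, min s t, max s t)))" if "s \<in> Rs j" "t \<in> Rs j" for s t
      using that R[OF j(1)] j(1) by (intro lipb_proj fP Pset_Inl) (auto simp: min_def max_def)
    have "lipb ?P (\<lambda>w. (\<Sum>s\<in>Rs j. \<Sum>t\<in>Rs j. Hf Rs w j a s * Hf Rs w j a' t * w (Inl (j, min s t, max s t)))
                       + (\<Sum>i<m. w (Inr i) * A i j $$ (a, a')))"
      using j finR by (intro lipb_add lipb_sum lipb_mult H T lamL) auto
    thus ?thesis unfolding Fmap_def qj by simp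
  qed
qed

lemma Fmap_image:
  fixes v :: "coord \<Rightarrow> real" and lam :: "real vec" and n :: "nat \<Rightarrow> nat" and m :: nat
    and A :: "nat \<Rightarrow> nat \<Rightarrow> real mat"
  defines "S \<equiv> \<lambda>j a b. Sblk n m A (Cmat_of n v) lam j $$ (a, b)"
  assumes v: "v \<in> PiE (cost_coords l n d) (\<lambda>_. UNIV)"
    and R: "\<And>j. j < l \<Longrightarrow> Rs j \<subseteq> {..<n j}"
    and span: "\<And>j. j < l \<Longrightarrow> \<forall>a<n j. \<exists>co. \<forall>b<n j. S j b a = (\<Sum>s\<in>Rs j. co s * S j b s)"
    and sym: "\<And>j. j < l \<Longrightarrow> fsym (n j) (S j)"
    and cv: "\<And>t. t < d \<Longrightarrow> v (Inr t) = (\<Sum>i<m. lam $ i * A0 i $ t)"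
  shows "v \<in> (\<lambda>w. restrict (Fmap m A A0 Rs w) (cost_coords l n d)) ` PiE (Pset l n m Rs) (\<lambda>_. UNIV)"
proof -
  define H where "H j a s = (if a \<in> Rs j then (if a = s then 1 else 0)
      else (SOME co. \<forall>b<n j. S j b a = (\<Sum>s\<in>Rs j. co s * S j b s)) s)" for j a s
  have HS: "S j b a = (\<Sum>s\<in>Rs j. H j a s * S j b s)" if j: "j < l" and a: "a < n j" and b: "b < n j" for j a b
  proof (cases "a \<in> Rs j")
    case True
    have finR: "finite (Rs j)" using R[OF j] finite_subset by blast
    have Ha: "H j a s = (if s = a then 1 else 0)" for s unfolding H_def using True by simp
    have "(\<Sum>s\<in>Rs j. H j a s * S j b s) = (\<Sum>s\<in>Rs j. if s = a then S j b s else 0)"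
      unfolding Ha by (intro sum.cong refl) simp
    also have "\<dots> = S j b a" using True finR by (subst sum.delta) auto
    finally show ?thesis by simp
  next
    case False
    define co0 where "co0 = (SOME co. \<forall>b<n j. S j b a = (\<Sum>s\<in>Rs j. co s * S j b s))"
    have "\<exists>co. \<forall>b<n j. S j b a = (\<Sum>s\<in>Rs j. co s * S j b s)" using span[OF j] a by blast
    hence hS: "\<forall>b<n j. S j b a = (\<Sum>s\<in>Rs j. co0 s * S j b s)"
      unfolding co0_def by (rule someI_ex)
    have Ha: "H j a s = co0 s" for s unfolding H_def co0_def using False by simp
    show ?thesis unfolding Ha using hS b by blast
  qed
  define w where "w = restrict (\<lambda>q. case q of
      Inl (j, a, a') \<Rightarrow> (if a \<in> Rs j \<and> a' \<in> Rs j then S j a a' else if a \<in> Rs j then H j a' a else H j a a')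
    | Inr i \<Rightarrow> lam $ i) (Pset l n m Rs)"
  have wP: "w \<in> PiE (Pset l n m Rs) (\<lambda>_. UNIV)" unfolding w_def by simp
  have eq: "v q = restrict (Fmap m A A0 Rs w) (cost_coords l n d) q" for q
  proof (cases "q \<in> cost_coords l n d")
    case False thus ?thesis using v by auto
  next
    case True
    show ?thesis
    proof (cases q)
      case (Inr t)
      hence t: "t < d" using True unfolding cost_coords_def by auto
      have "w (Inr i) = lam $ i" if "i < m" for i unfolding w_def using that by (simp add: Pset_Inr)
      thus ?thesis using True Inr t cv by (simp add: Fmap_def)
    next
      case (Inl jaa)
      then obtain j a a' where qj: "q = Inl (j, a, a')" by (cases jaa) auto
      hence j: "j < l" "a \<le> a'" "a' < n j" using True unfolding cost_coords_def by auto
      have a: "a < n j" using j by simp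
      have wl: "w (Inr i) = lam $ i" if "i < m" for i unfolding w_def using that by (simp add: Pset_Inr)
      have wT: "w (Inl (j, min s t, max s t)) = S j s t" if "s \<in> Rs j" "t \<in> Rs j" for s t
      proof -
        have "Inl (j, min s t, max s t) \<in> Pset l n m Rs"
          using that R[OF j(1)] j(1) by (intro Pset_Inl) (auto simp: min_def max_def)
        moreover have "S j (min s t) (max s t) = S j s t"
          using sym[OF j(1)] that R[OF j(1)] unfolding fsym_def by (auto simp: min_def max_def)
        moreover have "min s t \<in> Rs j" "max s t \<in> Rs j" using that by (auto simp: min_def max_def)
        ultimately show ?thesis unfolding w_def by simp
      qed
      have wH: "Hf Rs w j b s = H j b s" if b: "b < n j" and s: "s \<in> Rs j" for b s
      proof (cases "b \<in> Rs j")
        case True thus ?thesis unfolding Hf_def H_def by simp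
      next
        case False
        have bs: "b \<noteq> s" using False s by auto
        have inP: "Inl (j, min b s, max b s) \<in> Pset l n m Rs"
          using s R[OF j(1)] b j(1) by (intro Pset_Inl) (auto simp: min_def max_def)
        show ?thesis
        proof (cases "b < s")
          case True
          thus ?thesis unfolding Hf_def using False inP s unfolding w_def by (simp add: min_def max_def)
        next
          case False': False
          hence "s < b" using bs by simp
          thus ?thesis unfolding Hf_def using False inP s unfolding w_def by (simp add: min_def max_def)
        qed
      qed
      have key: "S j a a' = (\<Sum>s\<in>Rs j. \<Sum>t\<in>Rs j. H j a s * H j a' t * S j s t)"
      proof -
        have "S j a a' = (\<Sum>t\<in>Rs j. H j a' t * S j a t)" using HS[OF j(1) j(3) a] .
        also have "\<dots> = (\<Sum>t\<in>Rs j. H j a' t * (\<Sum>s\<in>Rs j. H j a s * S j s t))"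
        proof (intro sum.cong refl)
          fix t assume t: "t \<in> Rs j"
          have tn: "t < n j" using t R[OF j(1)] by auto
          have "S j a t = S j t a" using sym[OF j(1)] a tn unfolding fsym_def by auto
          also have "\<dots> = (\<Sum>s\<in>Rs j. H j a s * S j t s)" using HS[OF j(1) a tn] .
          also have "\<dots> = (\<Sum>s\<in>Rs j. H j a s * S j s t)"
            using sym[OF j(1)] tn R[OF j(1)] unfolding fsym_def by (intro sum.cong refl) auto
          finally show "H j a' t * S j a t = H j a' t * (\<Sum>s\<in>Rs j. H j a s * S j s t)" by simp
        qed
        also have "\<dots> = (\<Sum>s\<in>Rs j. \<Sum>t\<in>Rs j. H j a s * H j a' t * S j s t)"
          by (simp add: sum_distrib_left mult_ac) (rule sum.swap)
        finally show ?thesis .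
      qed
      have "Fmap m A A0 Rs w q = (\<Sum>s\<in>Rs j. \<Sum>t\<in>Rs j. H j a s * H j a' t * S j s t)
                       + (\<Sum>i<m. lam $ i * A i j $$ (a, a'))"
        unfolding Fmap_def qj using wl wT wH a j(3) R[OF j(1)] by (auto intro!: sum.cong)
      also have "\<dots> = S j a a' + (\<Sum>i<m. lam $ i * A i j $$ (a, a'))" using key by simp
      also have "\<dots> = v q"
        unfolding S_def qj using j
        by (simp add: Sblk_index Cmat_index min_def max_def)
      finally show ?thesis using True by simp
    qed
  qed
  hence "v = restrict (Fmap m A A0 Rs w) (cost_coords l n d)" by auto
  thus ?thesis using wP by blast
qed

lemma m_prime_ge:
  assumes feas: "feasible l n d m A A0 b Xs x"
  shows "int m - int d - (\<Sum>j\<in>{k..<l}. int (tau (vec_space.rank (n j) (Xs j)))) \<le> m_prime l n d m A A0 b k"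
proof -
  define B where "B = (\<Sum>j\<in>{k..<l}. int (tau (n j)))"
  let ?S = "{int m - int d - (\<Sum>j\<in>{k..<l}. int (tau (r j))) | r. possible_rank_tuple l n d m A A0 b k r}"
  have sub: "?S \<subseteq> {int m - int d - B .. int m - int d}"
  proof
    fix z assume "z \<in> ?S"
    then obtain r where z: "z = int m - int d - (\<Sum>j\<in>{k..<l}. int (tau (r j)))"
      and pr: "possible_rank_tuple l n d m A A0 b k r" by blast
    obtain Xs' x' where f': "feasible l n d m A A0 b Xs' x'"
      and rk: "\<forall>j\<in>{k..<l}. vec_space.rank (n j) (Xs' j) = r j"
      using pr unfolding possible_rank_tuple_def by blast
    have "r j \<le> n j" if "j \<in> {k..<l}" for j
    proof -
      have "Xs' j \<in> carrier_mat (n j) (n j)" using f' that unfolding feasible_def psd_def by auto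
      hence "vec_space.rank (n j) (Xs' j) \<le> n j" by (rule vec_space.rank_le_nc)
      thus ?thesis using rk that by simp
    qed
    hence "(\<Sum>j\<in>{k..<l}. int (tau (r j))) \<le> B" unfolding B_def
      by (intro sum_mono) (simp add: tau_mono)
    moreover have "0 \<le> (\<Sum>j\<in>{k..<l}. int (tau (r j)))" by (intro sum_nonneg) simp
    ultimately show "z \<in> {int m - int d - B .. int m - int d}" unfolding z by simp
  qed
  have fin: "finite ?S" by (rule finite_subset[OF sub]) simp
  have mem: "int m - int d - (\<Sum>j\<in>{k..<l}. int (tau (vec_space.rank (n j) (Xs j)))) \<in> ?S"
  proof -
    have "possible_rank_tuple l n d m A A0 b k (\<lambda>j. vec_space.rank (n j) (Xs j))"
      using feas unfolding possible_rank_tuple_def by blast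
    thus ?thesis by (intro CollectI exI[of _ "\<lambda>j. vec_space.rank (n j) (Xs j)"]) simp
  qed
  show ?thesis unfolding m_prime_def by (rule Max_ge[OF fin mem])
qed

lemma spurious_choice:
  fixes l k d m :: nat and n p :: "nat \<Rightarrow> nat"
    and A :: "nat \<Rightarrow> nat \<Rightarrow> real mat" and A0 :: "nat \<Rightarrow> real vec" and b :: "real vec"
    and v :: "coord \<Rightarrow> real"
  assumes k: "1 \<le> k" "k \<le> l"
    and A_sym: "\<And>i j. i < m \<Longrightarrow> j < l \<Longrightarrow> symm (n j) (A i j)"
    and A0_dim: "\<And>i. i < m \<Longrightarrow> A0 i \<in> carrier_vec d"
    and p_large: "\<And>j. j < k \<Longrightarrow>
        int (tau (p j)) > min (m_prime l n d m A A0 b k) (int (tau (n j)))"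
    and sp: "spurious_two_critical l n d m A A0 b k p (Cmat_of n v) (cvec_of d v) Ys Xs x"
  shows "\<exists>lam Rs. (\<forall>j<l. Rs j \<subseteq> {..<n j}) \<and>
     int m - int d < (\<Sum>j<l. int (tau (n j - card (Rs j)))) \<and>
     (\<forall>j<l. \<forall>a<n j. \<exists>co. \<forall>b<n j. Sblk n m A (Cmat_of n v) lam j $$ (b, a) =
          (\<Sum>s\<in>Rs j. co s * Sblk n m A (Cmat_of n v) lam j $$ (b, s))) \<and>
     (\<forall>j<l. fsym (n j) (\<lambda>a b. Sblk n m A (Cmat_of n v) lam j $$ (a, b))) \<and>
     (\<forall>t<d. v (Inr t) = (\<Sum>i<m. lam $ i * A0 i $ t))"
proof -
  let ?C = "Cmat_of n v" and ?c = "cvec_of d v"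
  obtain lam where oc: "one_critical_mult l n d m A A0 b k p ?C ?c Ys Xs x lam"
    and so: "\<forall>j<k. \<forall>U \<in> carrier_mat (n j) (p j).
            Aj m A j (U * transpose_mat (Ys j)) = 0\<^sub>v m \<longrightarrow>
            frob (Sblk n m A ?C lam j) (U * transpose_mat U) \<ge> 0"
    and ngm: "\<not> bm_global_min l n d m A A0 b k p ?C ?c Ys Xs x"
    using sp unfolding spurious_two_critical_def two_critical_def by blast
  define S where "S j = Sblk n m A ?C lam j" for j
  have Cc: "\<And>j. j < l \<Longrightarrow> ?C j \<in> carrier_mat (n j) (n j)" by (rule Cmat_carrier)
  have cc: "?c \<in> carrier_vec d" unfolding cvec_of_def by simp
  have bf: "bm_feasible l n d m A A0 b k p Ys Xs x" and sv: "Svec d m A0 ?c lam = 0\<^sub>v d"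
    and psdX: "\<forall>j\<in>{k..<l}. psd (n j) (S j)"
    and cs: "(\<Sum>j\<in>{k..<l}. frob (S j) (Xs j)) = 0"
    and SY: "\<And>j. j < k \<Longrightarrow> S j * Ys j = 0\<^sub>m (n j) (p j)"
    using oc unfolding one_critical_mult_def S_def by auto
  have feas: "feasible l n d m A A0 b (qcomb k Ys Xs) x" using bf unfolding bm_feasible_def by auto
  have Yc: "\<And>j. j < k \<Longrightarrow> Ys j \<in> carrier_mat (n j) (p j)" using bf unfolding bm_feasible_def by auto
  have Xpsd: "psd (n j) (Xs j)" if "j \<in> {k..<l}" for j
    using feas that unfolding feasible_def qcomb_def by auto
  have symS: "fsym (n j) (\<lambda>a b. S j $$ (a, b))" if "j < l" for j
  proof -
    have "fsym (n j) (ent (Sblk n m A ?C lam j))" by (rule Sblk_fsym) (use A_sym that in auto)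
    thus ?thesis unfolding S_def ent_def .
  qed
  have cv: "\<forall>t<d. v (Inr t) = (\<Sum>i<m. lam $ i * A0 i $ t)"
  proof (intro allI impI)
    fix t assume t: "t < d"
    have "Svec d m A0 ?c lam $ t = 0" using sv t by simp
    thus "v (Inr t) = (\<Sum>i<m. lam $ i * A0 i $ t)" using t unfolding Svec_def cvec_of_def by simp
  qed
  have "\<not> (\<forall>j<k. \<exists>w\<in>carrier_vec (p j). w \<noteq> 0\<^sub>v (p j) \<and> Ys j *\<^sub>v w = 0\<^sub>v (n j))"
  proof
    assume all: "\<forall>j<k. \<exists>w\<in>carrier_vec (p j). w \<noteq> 0\<^sub>v (p j) \<and> Ys j *\<^sub>v w = 0\<^sub>v (n j)"
    have "psd (n j) (Sblk n m A ?C lam j)" if j: "j < l" for j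
    proof (cases "j < k")
      case True
      then obtain w where w: "w \<in> carrier_vec (p j)" "w \<noteq> 0\<^sub>v (p j)" "Ys j *\<^sub>v w = 0\<^sub>v (n j)" using all by blast
      show ?thesis
        by (rule psd_from_second_order[where Y = "Ys j" and w = w]) (use A_sym j so True Yc[OF True] w in auto)
    next
      case False thus ?thesis using psdX j unfolding S_def by auto
    qed
    hence "bm_global_min l n d m A A0 b k p ?C ?c Ys Xs x"
      by (intro global_min_from_psd[OF A_sym A0_dim k(2) Cc cc oc])
    thus False using ngm by simp
  qed
  then obtain j0 where j0: "j0 < k"
    and inj: "\<forall>w\<in>carrier_vec (p j0). Ys j0 *\<^sub>v w = 0\<^sub>v (n j0) \<longrightarrow> w = 0\<^sub>v (p j0)" by blast
  have SX: "\<forall>a<n j. \<forall>b<n j. (\<Sum>c<n j. S j $$ (a, c) * Xs j $$ (c, b)) = 0" if j: "j \<in> {k..<l}" for j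
  proof -
    have nn: "\<forall>j\<in>{k..<l}. 0 \<le> frob (S j) (Xs j)" using psdX Xpsd by (auto intro: frob_psd_nonneg)
    have "frob (S j) (Xs j) = 0" using sum_nonneg_eq_0_iff[of "{k..<l}" "\<lambda>j. frob (S j) (Xs j)"] nn cs j by simp
    thus ?thesis using frob_psd_zero psdX Xpsd j by blast
  qed
  define cz where "cz j = (if j = j0 then p j0 else if k \<le> j then vec_space.rank (n j) (Xs j) else 0)" for j
  have ex: "\<exists>R \<subseteq> {..<n j}. card R + cz j \<le> n j \<and>
              (\<forall>a<n j. \<exists>co. \<forall>b<n j. S j $$ (b, a) = (\<Sum>s\<in>R. co s * S j $$ (b, s)))" if j: "j < l" for j
  proof (cases "j = j0")
    case True
    have Y: "Ys j0 \<in> carrier_mat (n j0) (p j0)" using Yc[OF j0] .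
    have ker: "\<forall>t\<in>{..<p j0}. \<forall>a<n j0. (\<Sum>b<n j0. S j0 $$ (a, b) * col (Ys j0) t $ b) = 0"
    proof (intro ballI allI impI)
      fix t a assume t: "t \<in> {..<p j0}" and a: "a < n j0"
      have "(S j0 * Ys j0) $$ (a, t) = 0" using SY[OF j0] a t by simp
      moreover have "(S j0 * Ys j0) $$ (a, t) = (\<Sum>b<n j0. S j0 $$ (a, b) * col (Ys j0) t $ b)"
        using Y a t unfolding S_def by (simp add: Sblk_def scalar_prod_def atLeast0LessThan)
      ultimately show "(\<Sum>b<n j0. S j0 $$ (a, b) * col (Ys j0) t $ b) = 0" by simp
    qed
    have "\<exists>R \<subseteq> {..<n j0}. card R + card {..<p j0} \<le> n j0 \<and>
           (\<forall>a<n j0. \<exists>co. \<forall>b<n j0. S j0 $$ (b, a) = (\<Sum>s\<in>R. co s * S j0 $$ (b, s)))"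
      by (rule span_from_kernel[OF symS[OF _] _ _ cols_indep_inj[OF Y inj] ker])
        (use j True Y in auto)
    thus ?thesis using True unfolding cz_def by simp
  next
    case False
    show ?thesis
    proof (cases "k \<le> j")
      case True
      have jk: "j \<in> {k..<l}" using True j by simp
      have X: "Xs j \<in> carrier_mat (n j) (n j)" using Xpsd[OF jk] unfolding psd_def by auto
      obtain Z where Z: "finite Z" "Z \<subseteq> set (cols (Xs j))" "card Z = vec_space.rank (n j) (Xs j)"
        "indep_fam (n j) Z id"
        using rank_indep[OF X] by blast
      have Zc: "\<forall>t\<in>Z. id t \<in> carrier_vec (n j)" using Z(2) X cols_dim by fastforce
      have ker: "\<forall>t\<in>Z. \<forall>a<n j. (\<Sum>b<n j. S j $$ (a, b) * id t $ b) = 0"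
      proof (intro ballI allI impI)
        fix t a assume t: "t \<in> Z" and a: "a < n j"
        obtain c where c: "c < n j" "t = col (Xs j) c" using Z(2) t X
          by (metis (no_types, lifting) cols_length cols_nth carrier_matD(2) in_set_conv_nth subsetD)
        show "(\<Sum>b<n j. S j $$ (a, b) * id t $ b) = 0"
          using SX[OF jk] a c X by simp
      qed
      have "\<exists>R \<subseteq> {..<n j}. card R + card Z \<le> n j \<and>
           (\<forall>a<n j. \<exists>co. \<forall>b<n j. S j $$ (b, a) = (\<Sum>s\<in>R. co s * S j $$ (b, s)))"
        by (rule span_from_kernel[OF symS[OF j] Z(1) Zc Z(4) ker])
      thus ?thesis using False True Z(3) unfolding cz_def by simp
    next
      case False2: False
      have "\<exists>R \<subseteq> {..<n j}. card R + card ({}::nat set) \<le> n j \<and>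
           (\<forall>a<n j. \<exists>co. \<forall>b<n j. S j $$ (b, a) = (\<Sum>s\<in>R. co s * S j $$ (b, s)))"
        by (rule span_from_kernel[OF symS[OF j], of "{}" "\<lambda>_. 0\<^sub>v (n j)"]) (auto simp: indep_fam_def)
      thus ?thesis using False False2 unfolding cz_def by simp
    qed
  qed
  have "\<forall>j. \<exists>R. j < l \<longrightarrow> R \<subseteq> {..<n j} \<and> card R + cz j \<le> n j \<and>
              (\<forall>a<n j. \<exists>co. \<forall>b<n j. S j $$ (b, a) = (\<Sum>s\<in>R. co s * S j $$ (b, s)))"
    using ex by blast
  then obtain Rs where Rs: "\<And>j. j < l \<Longrightarrow> Rs j \<subseteq> {..<n j} \<and> card (Rs j) + cz j \<le> n j \<and>
              (\<forall>a<n j. \<exists>co. \<forall>b<n j. S j $$ (b, a) = (\<Sum>s\<in>Rs j. co s * S j $$ (b, s)))"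
    by (metis choice)
  have j0l: "j0 < l" using j0 k by simp
  have pn: "p j0 \<le> n j0" using Rs[OF j0l] unfolding cz_def by simp
  have sum_cz: "(\<Sum>j<l. int (tau (cz j))) = int (tau (p j0)) + (\<Sum>j\<in>{k..<l}. int (tau (vec_space.rank (n j) (Xs j))))"
  proof -
    have "(\<Sum>j<l. int (tau (cz j))) = (\<Sum>j<k. int (tau (cz j))) + (\<Sum>j\<in>{k..<l}. int (tau (cz j)))"
      by (rule split_lessThan_sum[OF k(2)])
    also have "(\<Sum>j<k. int (tau (cz j))) = (\<Sum>j<k. if j = j0 then int (tau (p j0)) else 0)"
      by (intro sum.cong refl) (auto simp: cz_def tau_def)
    also have "\<dots> = int (tau (p j0))" using j0 by (subst sum.delta) auto
    also have "(\<Sum>j\<in>{k..<l}. int (tau (cz j))) = (\<Sum>j\<in>{k..<l}. int (tau (vec_space.rank (n j) (Xs j))))"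
      using j0 by (intro sum.cong refl) (auto simp: cz_def)
    finally show ?thesis .
  qed
  have le: "(\<Sum>j<l. int (tau (cz j))) \<le> (\<Sum>j<l. int (tau (n j - card (Rs j))))"
  proof (intro sum_mono)
    fix j assume "j \<in> {..<l}"
    hence "cz j \<le> n j - card (Rs j)" using Rs[of j] by auto
    thus "int (tau (cz j)) \<le> int (tau (n j - card (Rs j)))" by (simp add: tau_mono)
  qed
  have mp: "int m - int d - (\<Sum>j\<in>{k..<l}. int (tau (vec_space.rank (n j) (Xs j)))) \<le> m_prime l n d m A A0 b k"
  proof -
    have "(\<Sum>j\<in>{k..<l}. int (tau (vec_space.rank (n j) (qcomb k Ys Xs j)))) =
          (\<Sum>j\<in>{k..<l}. int (tau (vec_space.rank (n j) (Xs j))))"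
      by (intro sum.cong refl) (auto simp: qcomb_def)
    thus ?thesis using m_prime_ge[OF feas, of k] by simp
  qed
  have "int (tau (p j0)) \<le> int (tau (n j0))" using pn by (simp add: tau_mono)
  hence "int (tau (p j0)) > m_prime l n d m A A0 b k" using p_large[OF j0] by linarith
  hence cnt: "int m - int d < (\<Sum>j<l. int (tau (n j - card (Rs j))))" using mp sum_cz le by linarith
  show ?thesis
    using Rs cnt symS cv unfolding S_def by (intro exI[of _ lam] exI[of _ Rs]) auto
qed

theorem theorem9:
  fixes l k d m :: nat and n p :: "nat \<Rightarrow> nat"
    and A :: "nat \<Rightarrow> nat \<Rightarrow> real mat" and A0 :: "nat \<Rightarrow> real vec" and b :: "real vec"
  assumes k: "1 \<le> k" "k \<le> l"
    and A_sym: "\<And>i j. i < m \<Longrightarrow> j < l \<Longrightarrow> symm (n j) (A i j)"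
    and A0_dim: "\<And>i. i < m \<Longrightarrow> A0 i \<in> carrier_vec d"
    and b_dim: "b \<in> carrier_vec m"
    and nonempty: "\<exists>Xs x. feasible l n d m A A0 b Xs x"
    and p_pos: "\<And>j. j < k \<Longrightarrow> p j > 0"
    and p_large: "\<And>j. j < k \<Longrightarrow>
        int (tau (p j)) > min (m_prime l n d m A A0 b k) (int (tau (n j)))"
  shows "AE v in cost_measure l n d.
           sdp_attained l n d m A A0 b (Cmat_of n v) (cvec_of d v) \<longrightarrow>
           (\<forall>Ys Xs x. \<not> spurious_two_critical l n d m A A0 b k p
                          (Cmat_of n v) (cvec_of d v) Ys Xs x)"
proof -
  let ?Q = "cost_coords l n d"
  let ?M = "cost_measure l n d"
  define Ch where "Ch = PiE {..<l} (\<lambda>j. Pow {..<n j})"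
  define good where "good Rs \<longleftrightarrow> int m - int d < (\<Sum>j<l. int (tau (n j - card (Rs j))))" for Rs :: "nat \<Rightarrow> nat set"
  define img where "img Rs = (\<lambda>w. restrict (Fmap m A A0 Rs w) ?Q) ` PiE (Pset l n m Rs) (\<lambda>_. UNIV)" for Rs
  have M: "?M = PiM ?Q (\<lambda>_. lborel)" unfolding cost_measure_def ..
  have each: "\<exists>N\<in>null_sets ?M. img Rs \<subseteq> N" if Rs: "Rs \<in> Ch" "good Rs" for Rs
  proof -
    have R: "\<And>j. j < l \<Longrightarrow> Rs j \<subseteq> {..<n j}" using Rs(1) unfolding Ch_def by auto
    have "\<exists>N\<in>null_sets (PiM ?Q (\<lambda>_. lborel)).
        (\<lambda>x. restrict (Fmap m A A0 Rs x) ?Q) ` PiE (Pset l n m Rs) (\<lambda>_. UNIV) \<subseteq> N"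
    proof (rule lowdim_null[OF finite_Pset finite_cost_coords])
      show "card (Pset l n m Rs) < card ?Q"
        by (rule card_Pset_less[OF R]) (use Rs(2) in \<open>auto simp: good_def\<close>)
      fix r
      show "\<exists>L. \<forall>x\<in>cube (Pset l n m Rs) r. \<forall>y\<in>cube (Pset l n m Rs) r. \<forall>q\<in>?Q.
              \<bar>Fmap m A A0 Rs x q - Fmap m A A0 Rs y q\<bar> \<le> L * (\<Sum>i\<in>Pset l n m Rs. \<bar>x i - y i\<bar>)"
        by (rule lipb_family[OF finite_cost_coords]) (use Fmap_lipb[OF R] in auto)
    qed
    thus ?thesis unfolding img_def M .
  qed
  hence "\<forall>Rs\<in>{Rs\<in>Ch. good Rs}. \<exists>N. N \<in> null_sets ?M \<and> img Rs \<subseteq> N" by blast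
  then obtain NF where NF: "\<And>Rs. Rs \<in> {Rs\<in>Ch. good Rs} \<Longrightarrow> NF Rs \<in> null_sets ?M \<and> img Rs \<subseteq> NF Rs"
    by metis
  define N where "N = (\<Union>Rs\<in>{Rs\<in>Ch. good Rs}. NF Rs)"
  have finCh: "finite Ch" unfolding Ch_def by (intro finite_PiE) auto
  have Nnull: "N \<in> null_sets ?M"
    unfolding N_def using NF finCh by (intro null_sets_UN') (auto intro: countable_finite)
  show ?thesis
  proof (rule AE_I'[OF Nnull], rule subsetI)
    fix v assume "v \<in> {v \<in> space ?M. \<not> (sdp_attained l n d m A A0 b (Cmat_of n v) (cvec_of d v) \<longrightarrow>
           (\<forall>Ys Xs x. \<not> spurious_two_critical l n d m A A0 b k p (Cmat_of n v) (cvec_of d v) Ys Xs x))}"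
    then have vs: "v \<in> space ?M"
      and "\<exists>Ys Xs x. spurious_two_critical l n d m A A0 b k p (Cmat_of n v) (cvec_of d v) Ys Xs x" by auto
    then obtain Ys Xs x where sp: "spurious_two_critical l n d m A A0 b k p (Cmat_of n v) (cvec_of d v) Ys Xs x"
      by blast
    obtain lam Rs where R: "\<forall>j<l. Rs j \<subseteq> {..<n j}"
      and cnt: "int m - int d < (\<Sum>j<l. int (tau (n j - card (Rs j))))"
      and span: "\<forall>j<l. \<forall>a<n j. \<exists>co. \<forall>b<n j. Sblk n m A (Cmat_of n v) lam j $$ (b, a) =
          (\<Sum>s\<in>Rs j. co s * Sblk n m A (Cmat_of n v) lam j $$ (b, s))"
      and sym: "\<forall>j<l. fsym (n j) (\<lambda>a b. Sblk n m A (Cmat_of n v) lam j $$ (a, b))"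
      and cv: "\<forall>t<d. v (Inr t) = (\<Sum>i<m. lam $ i * A0 i $ t)"
      using spurious_choice[OF k A_sym A0_dim p_large sp] by blast
    define Rs' where "Rs' = restrict Rs {..<l}"
    have RsCh: "Rs' \<in> Ch" unfolding Ch_def Rs'_def using R by auto
    have eqR: "\<And>j. j < l \<Longrightarrow> Rs' j = Rs j" unfolding Rs'_def by simp
    have gd: "good Rs'" unfolding good_def using cnt eqR by simp
    have vsp: "v \<in> PiE ?Q (\<lambda>_. UNIV)" using vs unfolding M by (simp add: space_PiM)
    have "v \<in> img Rs'"
      unfolding img_def
      by (rule Fmap_image[OF vsp]) (use R span sym cv eqR in auto)
    hence "v \<in> NF Rs'" using NF[of Rs'] RsCh gd by auto
    thus "v \<in> N" unfolding N_def using RsCh gd by auto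
  qed
qed

end
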